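(* Assume the setting described in the context and let $\Theta\in C([0,\infty),\mathbb{R}^{\mathfrak{d}})$ satisfy $\Theta_t=\Theta_0-\int_0^t\mathcal{G}(\Theta_s)\,\mathrm{d}s$ for all $t\in[0,\infty)$. Then $$\limsup_{t\to\infty}\mathcal{L}(\Theta_t)\le\inf_{\xi\in\mathbb{R}}\Big[\int_{[\mathscr{a},\mathscr{b}]^d}(f(x)-\xi)^2\,\mu(\mathrm{d}x)\Big].$$
   Context: Setting: $d,H,\mathfrak{d}\in\mathbb{N}$ with $\mathfrak{d}=dH+2H+1$, $\mathscr{a}\in\mathbb{R}$, $\mathscr{b}\in(\mathscr{a},\infty)$, $f\in C([\mathscr{a},\mathscr{b}]^d,\mathbb{R})$. For $\theta=(\theta_1,\dots,\theta_{\mathfrak{d}})\in\mathbb{R}^{\mathfrak{d}}$, $i\in\{1,\dots,H\}$, $j\in\{1,\dots,d\}$ put $\mathfrak{w}^\theta_{i,j}=\theta_{(i-1)d+j}$, $\mathfrak{b}^\theta_i=\theta_{Hd+i}$, $\mathfrak{v}^\theta_i=\theta_{H(d+1)+i}$, $\mathfrak{c}^\theta=\theta_{\mathfrak{d}}$. Let $\mathfrak{R}_r\in C^1(\mathbb{R},\mathbb{R})$, $r\in\mathbb{N}$, satisfy for all $x\in\mathbb{R}$ that $\lim_{r\to\infty}\big(|\mathfrak{R}_r(x)-\max\{x,0\}|+|(\mathfrak{R}_r)'(x)-\mathbb{1}_{(0,\infty)}(x)|\big)=0$ and $\sup_{r\in\mathbb{N}}\sup_{y\in[-|x|,|x|]}|(\mathfrak{R}_r)'(y)|<\infty$.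 Let $\mu$ be a finite measure on $\mathcal{B}([\mathscr{a},\mathscr{b}]^d)$. For $\theta\in\mathbb{R}^{\mathfrak{d}}$, $x\in\mathbb{R}^d$ let $\mathscr{N}^\theta(x)=\mathfrak{c}^\theta+\sum_{i=1}^H\mathfrak{v}^\theta_i\max\{\mathfrak{b}^\theta_i+\sum_{j=1}^d\mathfrak{w}^\theta_{i,j}x_j,0\}$, $\mathcal{L}(\theta)=\int_{[\mathscr{a},\mathscr{b}]^d}(f(y)-\mathscr{N}^\theta(y))^2\,\mu(\mathrm{d}y)$, and for $r\in\mathbb{N}$, $\mathfrak{L}_r(\theta)=\int_{[\mathscr{a},\mathscr{b}]^d}\big(f(y)-\mathfrak{c}^\theta-\sum_{i=1}^H\mathfrak{v}^\theta_i\,\mathfrak{R}_r(\mathfrak{b}^\theta_i+\sum_{j=1}^d\mathfrak{w}^\theta_{i,j}y_j)\big)^2\,\mu(\mathrm{d}y)$. Let $\mathcal{G}\colon\mathbb{R}^{\mathfrak{d}}\to\mathbb{R}^{\mathfrak{d}}$ satisfy $\mathcal{G}(\theta)=\lim_{r\to\infty}(\nabla\mathfrak{L}_r)(\theta)$ for every $\theta$ for which this limit exists ($\mathcal{G}$ is locally bounded and measurable). *)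

theory Defs
  imports "HOL-Analysis.Analysis"
begin

text \<open>Parameter space R^(dH+2H+1), identified with
  (real^'d)^'h  x  real^'h  x  real^'h  x  real
  (inner weights w_{i,j}, inner biases b_i, outer weights v_i, outer bias c).\<close>

type_synonym ('d,'h) param = "((real^'d)^'h) \<times> (real^'h) \<times> (real^'h) \<times> real"

definition wW :: "('d::finite,'h::finite) param \<Rightarrow> 'h \<Rightarrow> 'd \<Rightarrow> real" where
  "wW \<theta> i j = (fst \<theta>) $ i $ j"
definition bB :: "('d::finite,'h::finite) param \<Rightarrow> 'h \<Rightarrow> real" where
  "bB \<theta> i = (fst (snd \<theta>)) $ i"
definition vV :: "('d::finite,'h::finite) param \<Rightarrow> 'h \<Rightarrow> real" where
  "vV \<theta> i = (fst (snd (snd \<theta>))) $ i"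
definition cC :: "('d::finite,'h::finite) param \<Rightarrow> real" where
  "cC \<theta> = snd (snd (snd \<theta>))"

definition realis :: "(real \<Rightarrow> real) \<Rightarrow> ('d::finite,'h::finite) param \<Rightarrow> real^'d \<Rightarrow> real" where
  "realis act \<theta> x = cC \<theta> + (\<Sum>i\<in>UNIV. vV \<theta> i * act (bB \<theta> i + (\<Sum>j\<in>UNIV. wW \<theta> i j * x $ j)))"

definition relu :: "real \<Rightarrow> real" where "relu x = max x 0"

definition risk :: "(real^'d) measure \<Rightarrow> (real^'d \<Rightarrow> real) \<Rightarrow> (real \<Rightarrow> real)
    \<Rightarrow> ('d::finite,'h::finite) param \<Rightarrow> real" where
  "risk \<mu> f act \<theta> = (\<integral>y. (f y - realis act \<theta> y)\<^sup>2 \<partial>\<mu>)"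

definition cube :: "real \<Rightarrow> real \<Rightarrow> (real^'d::finite) set" where
  "cube a b = {x. \<forall>j. a \<le> x $ j \<and> x $ j \<le> b}"

definition grad :: "('a::real_inner \<Rightarrow> real) \<Rightarrow> 'a \<Rightarrow> 'a" where
  "grad F x = (THE g. (F has_derivative (\<lambda>h. g \<bullet> h)) (at x))"

end

theory Submission
  imports Defs
begin

definition zz :: "('d::finite,'h::finite) param \<Rightarrow> 'h \<Rightarrow> real^'d \<Rightarrow> real" where
  "zz \<theta> i y = bB \<theta> i + (\<Sum>j\<in>UNIV. wW \<theta> i j * y $ j)"

definition DN :: "(real\<Rightarrow>real) \<Rightarrow> (real\<Rightarrow>real) \<Rightarrow> ('d::finite,'h::finite) param \<Rightarrow> real^'d \<Rightarrow> ('d,'h) param" where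
  "DN act act' \<theta> y = ((\<chi> i. \<chi> j. vV \<theta> i * act' (zz \<theta> i y) * y $ j), (\<chi> i. vV \<theta> i * act' (zz \<theta> i y)),
     (\<chi> i. act (zz \<theta> i y)), 1)"

lemma bl_wW: "bounded_linear (\<lambda>\<theta>. wW \<theta> i j)"
  unfolding wW_def by (rule bounded_linear_compose[OF bounded_linear_vec_nth] bounded_linear_compose[OF bounded_linear_fst] bounded_linear_compose[OF bounded_linear_snd] bounded_linear_fst bounded_linear_snd)+
lemma bl_bB: "bounded_linear (\<lambda>\<theta>. bB \<theta> i)"
  unfolding bB_def by (rule bounded_linear_compose[OF bounded_linear_vec_nth] bounded_linear_compose[OF bounded_linear_fst] bounded_linear_compose[OF bounded_linear_snd] bounded_linear_fst bounded_linear_snd)+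
lemma bl_vV: "bounded_linear (\<lambda>\<theta>. vV \<theta> i)"
  unfolding vV_def by (rule bounded_linear_compose[OF bounded_linear_vec_nth] bounded_linear_compose[OF bounded_linear_fst] bounded_linear_compose[OF bounded_linear_snd] bounded_linear_fst bounded_linear_snd)+
lemma bl_cC: "bounded_linear (\<lambda>\<theta>. cC \<theta>)"
  unfolding cC_def by (rule bounded_linear_compose[OF bounded_linear_vec_nth] bounded_linear_compose[OF bounded_linear_fst] bounded_linear_compose[OF bounded_linear_snd] bounded_linear_fst bounded_linear_snd)+

lemma realis_unf: "realis act \<theta> y = cC \<theta> + (\<Sum>i\<in>UNIV. vV \<theta> i * act (zz \<theta> i y))"
  by (simp add: realis_def zz_def)

lemma DN_inner: "DN act act' \<theta> y \<bullet> h = cC h + (\<Sum>i\<in>UNIV. vV h i * act (zz \<theta> i y) +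
      vV \<theta> i * (act' (zz \<theta> i y) * (bB h i + (\<Sum>j\<in>UNIV. wW h i j * y $ j))))"
  by (cases h rule: prod_cases4) (simp add: DN_def inner_vec_def wW_def bB_def vV_def cC_def sum.distrib sum_distrib_left
       algebra_simps)

lemma realis_deriv:
  assumes "\<And>z. (act has_real_derivative act' z) (at z)"
  shows "((\<lambda>\<theta>. realis act \<theta> y) has_derivative (\<lambda>h. DN act act' \<theta> y \<bullet> h)) (at \<theta>)"
proof -
  have w: "((\<lambda>\<theta>. wW \<theta> i j) has_derivative (\<lambda>h. wW h i j)) (at \<theta>)" for i j
    using bl_wW bounded_linear_imp_has_derivative by blast
  have b: "((\<lambda>\<theta>. bB \<theta> i) has_derivative (\<lambda>h. bB h i)) (at \<theta>)" for i
    using bl_bB bounded_linear_imp_has_derivative by blast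
  have v: "((\<lambda>\<theta>. vV \<theta> i) has_derivative (\<lambda>h. vV h i)) (at \<theta>)" for i
    using bl_vV bounded_linear_imp_has_derivative by blast
  have c: "((\<lambda>\<theta>. cC \<theta>) has_derivative (\<lambda>h. cC h)) (at \<theta>)"
    using bl_cC bounded_linear_imp_has_derivative by blast
  have z: "((\<lambda>\<theta>. zz \<theta> i y) has_derivative (\<lambda>h. bB h i + (\<Sum>j\<in>UNIV. wW h i j * y $ j))) (at \<theta>)" for i
    unfolding zz_def by (intro has_derivative_add b has_derivative_sum has_derivative_mult_left w)
  have az: "((\<lambda>\<theta>. act (zz \<theta> i y)) has_derivative (\<lambda>h. act' (zz \<theta> i y) * (bB h i + (\<Sum>j\<in>UNIV. wW h i j * y $ j)))) (at \<theta>)" for i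
    using has_derivative_compose[OF z assms[unfolded has_field_derivative_def]] by simp
  show ?thesis
    unfolding realis_unf DN_inner
    by (intro has_derivative_add c has_derivative_sum has_derivative_mult[OF v az, THEN has_derivative_eq_rhs])
      (auto simp: algebra_simps)
qed

lemma grad_eqI:
  fixes F :: "'a::real_inner \<Rightarrow> real"
  assumes "(F has_derivative (\<lambda>h. g \<bullet> h)) (at x)"
  shows "grad F x = g"
  unfolding grad_def
proof (rule the_equality)
  show "(F has_derivative (\<lambda>h. g \<bullet> h)) (at x)" by fact
  fix g' assume "(F has_derivative (\<lambda>h. g' \<bullet> h)) (at x)"
  from has_derivative_unique[OF this assms] have "\<And>h. g' \<bullet> h = g \<bullet> h" by metis
  from this[of "g' - g"] have "(g' - g) \<bullet> (g' - g) = 0" by (simp add: inner_diff_left)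
  then show "g' = g" by simp
qed

lemma my_norm_bound:
  fixes f :: "'a \<Rightarrow> 'b::{banach,second_countable_topology}"
  assumes "integrable M f" "integrable M g" "\<And>x. x \<in> space M \<Longrightarrow> norm(f x) \<le> g x"
  shows "norm (\<integral>x. f x \<partial>M) \<le> (\<integral>x. g x \<partial>M)"
  using assms by (metis (mono_tags) integrable_norm integral_mono integral_norm_bound order_trans)

lemma integral_has_derivative:
  fixes F :: "'p::euclidean_space \<Rightarrow> 'y \<Rightarrow> real" and F' :: "'p \<Rightarrow> 'y \<Rightarrow> 'p"
  assumes fm: "finite_measure M"
    and der: "\<And>\<theta> y. y \<in> space M \<Longrightarrow> ((\<lambda>\<theta>. F \<theta> y) has_derivative (\<lambda>h. F' \<theta> y \<bullet> h)) (at \<theta>)"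
    and intF: "\<And>\<theta>. integrable M (F \<theta>)" and intF': "\<And>\<theta>. integrable M (F' \<theta>)"
    and unif: "\<And>\<epsilon>. \<epsilon> > 0 \<Longrightarrow> \<exists>\<delta>>0. \<forall>\<theta>. norm (\<theta> - \<theta>0) < \<delta> \<longrightarrow> (\<forall>y\<in>space M. norm (F' \<theta> y - F' \<theta>0 y) \<le> \<epsilon>)"
  shows "((\<lambda>\<theta>. \<integral>y. F \<theta> y \<partial>M) has_derivative (\<lambda>h. (\<integral>y. F' \<theta>0 y \<partial>M) \<bullet> h)) (at \<theta>0)"
    and "continuous (at \<theta>0) (\<lambda>\<theta>. \<integral>y. F' \<theta> y \<partial>M)"
proof -
  interpret finite_measure M by (rule fm)
  define m where "m = measure M (space M)"
  have m0: "m \<ge> 0" unfolding m_def by simp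
  show "((\<lambda>\<theta>. \<integral>y. F \<theta> y \<partial>M) has_derivative (\<lambda>h. (\<integral>y. F' \<theta>0 y \<partial>M) \<bullet> h)) (at \<theta>0)"
    unfolding has_derivative_at_alt
  proof (intro conjI allI impI)
    show "bounded_linear (\<lambda>h. (\<integral>y. F' \<theta>0 y \<partial>M) \<bullet> h)" by (rule bounded_linear_inner_right)
    fix e :: real assume e: "e > 0"
    define \<epsilon> where "\<epsilon> = e / (m + 1)"
    have \<epsilon>: "\<epsilon> > 0" using e m0 unfolding \<epsilon>_def by simp
    obtain \<delta> where \<delta>: "\<delta> > 0" "\<And>\<theta> y. norm (\<theta> - \<theta>0) < \<delta> \<Longrightarrow> y \<in> space M \<Longrightarrow> norm (F' \<theta> y - F' \<theta>0 y) \<le> \<epsilon>"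
      using unif[OF \<epsilon>] by blast
    show "\<exists>d>0. \<forall>\<theta>. norm (\<theta> - \<theta>0) < d \<longrightarrow>
        norm ((\<integral>y. F \<theta> y \<partial>M) - (\<integral>y. F \<theta>0 y \<partial>M) - (\<integral>y. F' \<theta>0 y \<partial>M) \<bullet> (\<theta> - \<theta>0)) \<le> e * norm (\<theta> - \<theta>0)"
    proof (intro exI[of _ \<delta>] conjI allI impI)
      show "\<delta> > 0" by fact
      fix \<theta> assume th: "norm (\<theta> - \<theta>0) < \<delta>"
      have pt: "norm (F \<theta> y - F \<theta>0 y - F' \<theta>0 y \<bullet> (\<theta> - \<theta>0)) \<le> norm (\<theta> - \<theta>0) * \<epsilon>" if y: "y \<in> space M" for y
      proof -
        have a1: "\<theta>0 + t *\<^sub>R (\<theta> - \<theta>0) \<in> ball \<theta>0 \<delta>" if "t \<in> {0..1}" for t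
        proof -
          have "norm (t *\<^sub>R (\<theta> - \<theta>0)) \<le> norm (\<theta> - \<theta>0)" using that by (auto intro: mult_left_le_one_le)
          then show ?thesis using th by (simp add: dist_norm)
        qed
        have a2: "((\<lambda>\<theta>. F \<theta> y) has_derivative (\<lambda>h. F' x y \<bullet> h)) (at x within ball \<theta>0 \<delta>)" if "x \<in> ball \<theta>0 \<delta>" for x
          using der[OF y, of x] by (simp add: has_derivative_at_withinI)
        have a3: "onorm ((\<lambda>h. F' x y \<bullet> h) - (\<lambda>h. F' \<theta>0 y \<bullet> h)) \<le> \<epsilon>" if "x \<in> ball \<theta>0 \<delta>" for x
        proof (rule onorm_le)
          fix h
          have "norm (((\<lambda>h. F' x y \<bullet> h) - (\<lambda>h. F' \<theta>0 y \<bullet> h)) h) = \<bar>(F' x y - F' \<theta>0 y) \<bullet> h\<bar>"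
            by (simp add: inner_diff_left)
          also have "\<dots> \<le> norm (F' x y - F' \<theta>0 y) * norm h" by (rule Cauchy_Schwarz_ineq2)
          also have "\<dots> \<le> \<epsilon> * norm h"
            using \<delta>(2)[of x y] that y by (intro mult_right_mono) (auto simp: dist_norm norm_minus_commute)
          finally show "norm (((\<lambda>h. F' x y \<bullet> h) - (\<lambda>h. F' \<theta>0 y \<bullet> h)) h) \<le> \<epsilon> * norm h" .
        qed
        have "\<theta>0 \<in> ball \<theta>0 \<delta>" using \<delta> by simp
        from differentiable_bound_linearization[OF a1 a2 a3 this] show ?thesis by simp
      qed
      have "(\<integral>y. F \<theta> y \<partial>M) - (\<integral>y. F \<theta>0 y \<partial>M) - (\<integral>y. F' \<theta>0 y \<partial>M) \<bullet> (\<theta> - \<theta>0)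
          = (\<integral>y. F \<theta> y - F \<theta>0 y - F' \<theta>0 y \<bullet> (\<theta> - \<theta>0) \<partial>M)"
        using intF intF' by simp
      also have "norm \<dots> \<le> (\<integral>y. norm (\<theta> - \<theta>0) * \<epsilon> \<partial>M)"
        by (rule my_norm_bound) (use intF intF' pt in auto)
      also have "\<dots> = m * (norm (\<theta> - \<theta>0) * \<epsilon>)" by (simp add: m_def)
      also have "\<dots> \<le> e * norm (\<theta> - \<theta>0)"
      proof -
        have "m * \<epsilon> \<le> e" using m0 e unfolding \<epsilon>_def by (simp add: field_simps)
        then show ?thesis using mult_right_mono[OF \<open>m * \<epsilon> \<le> e\<close> norm_ge_zero[of "\<theta> - \<theta>0"]]
          by (simp add: algebra_simps)
      qed
      finally show "norm ((\<integral>y. F \<theta> y \<partial>M) - (\<integral>y. F \<theta>0 y \<partial>M) - (\<integral>y. F' \<theta>0 y \<partial>M) \<bullet> (\<theta> - \<theta>0)) \<le> e * norm (\<theta> - \<theta>0)" .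
    qed
  qed
  show "continuous (at \<theta>0) (\<lambda>\<theta>. \<integral>y. F' \<theta> y \<partial>M)"
    unfolding continuous_at_eps_delta
  proof (intro allI impI)
    fix e :: real assume e: "e > 0"
    define \<epsilon> where "\<epsilon> = e / (m + 1) / 2"
    have \<epsilon>: "\<epsilon> > 0" using e m0 unfolding \<epsilon>_def by simp
    obtain \<delta> where \<delta>: "\<delta> > 0" "\<And>\<theta> y. norm (\<theta> - \<theta>0) < \<delta> \<Longrightarrow> y \<in> space M \<Longrightarrow> norm (F' \<theta> y - F' \<theta>0 y) \<le> \<epsilon>"
      using unif[OF \<epsilon>] by blast
    show "\<exists>d>0. \<forall>x'. dist x' \<theta>0 < d \<longrightarrow> dist (\<integral>y. F' x' y \<partial>M) (\<integral>y. F' \<theta>0 y \<partial>M) < e"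
    proof (intro exI[of _ \<delta>] conjI allI impI)
      show "\<delta> > 0" by fact
      fix \<theta> assume th: "dist \<theta> \<theta>0 < \<delta>"
      have "dist (\<integral>y. F' \<theta> y \<partial>M) (\<integral>y. F' \<theta>0 y \<partial>M) = norm (\<integral>y. F' \<theta> y - F' \<theta>0 y \<partial>M)"
        using intF' by (simp add: dist_norm)
      also have "\<dots> \<le> (\<integral>y. \<epsilon> \<partial>M)"
        by (rule my_norm_bound) (use intF' \<delta> th in \<open>auto simp: dist_norm\<close>)
      also have "\<dots> = m * \<epsilon>" by (simp add: m_def)
      also have "\<dots> < e" using m0 e unfolding \<epsilon>_def by (simp add: field_simps add_nonneg_pos)
      finally show "dist (\<integral>y. F' \<theta> y \<partial>M) (\<integral>y. F' \<theta>0 y \<partial>M) < e" .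
    qed
  qed
qed

lemma cube_cbox: "cube a b = cbox (\<chi> _. a) (\<chi> _. b :: real^'d::finite)"
  unfolding cube_def interval_cbox_cart[symmetric] by (auto simp: less_eq_vec_def)

lemma compact_cube: "compact (cube a b :: (real^'d::finite) set)"
  unfolding cube_cbox by (rule compact_cbox)

lemma comp_bounds:
  fixes \<theta> :: "('d::finite,'h::finite) param"
  shows "\<bar>wW \<theta> i j\<bar> \<le> norm \<theta>" "\<bar>bB \<theta> i\<bar> \<le> norm \<theta>" "\<bar>vV \<theta> i\<bar> \<le> norm \<theta>" "\<bar>cC \<theta>\<bar> \<le> norm \<theta>"
proof -
  obtain w b' v c where th: "\<theta> = (w, b', v, c)" by (cases \<theta> rule: prod_cases4)
  have nw: "norm w \<le> norm \<theta>" and nb: "norm b' \<le> norm \<theta>" and nv: "norm v \<le> norm \<theta>" and nc: "norm c \<le> norm \<theta>"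
    unfolding th by (meson norm_fst_le norm_snd_le order_trans)+
  show "\<bar>wW \<theta> i j\<bar> \<le> norm \<theta>" unfolding wW_def th
    using component_le_norm_cart[of "w $ i" j] Finite_Cartesian_Product.norm_nth_le[of w i] nw th by simp
  show "\<bar>bB \<theta> i\<bar> \<le> norm \<theta>" unfolding bB_def th
    using component_le_norm_cart[of b' i] nb th by simp
  show "\<bar>vV \<theta> i\<bar> \<le> norm \<theta>" unfolding vV_def th
    using component_le_norm_cart[of v i] nv th by simp
  show "\<bar>cC \<theta>\<bar> \<le> norm \<theta>" unfolding cC_def th using nc th by simp
qed

lemma zz_bound:
  fixes \<theta> :: "('d::finite,'h::finite) param"
  assumes "norm \<theta> \<le> \<rho>" "\<And>j. \<bar>y $ j\<bar> \<le> Y"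
  shows "\<bar>zz \<theta> i y\<bar> \<le> \<rho> + real CARD('d) * (\<rho> * Y)"
proof -
  have "\<bar>zz \<theta> i y\<bar> \<le> \<bar>bB \<theta> i\<bar> + (\<Sum>j\<in>UNIV. \<bar>wW \<theta> i j * y $ j\<bar>)"
    unfolding zz_def by (rule order_trans[OF abs_triangle_ineq add_left_mono[OF sum_abs]])
  also have "\<dots> \<le> \<rho> + (\<Sum>j\<in>(UNIV::'d set). \<rho> * Y)"
    using comp_bounds[of \<theta>] assms
    by (intro add_mono sum_mono) (auto simp: abs_mult intro!: mult_mono order_trans[OF _ assms(1)])
  finally show ?thesis by simp
qed

lemma realis_bound:
  fixes \<theta> :: "('d::finite,'h::finite) param"
  assumes "norm \<theta> \<le> \<rho>" "\<And>i. \<bar>act (zz \<theta> i y)\<bar> \<le> C"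
  shows "\<bar>realis act \<theta> y\<bar> \<le> \<rho> + real CARD('h) * (\<rho> * C)"
proof -
  have "\<bar>realis act \<theta> y\<bar> \<le> \<bar>cC \<theta>\<bar> + (\<Sum>i\<in>UNIV. \<bar>vV \<theta> i * act (zz \<theta> i y)\<bar>)"
    unfolding realis_unf by (rule order_trans[OF abs_triangle_ineq add_left_mono[OF sum_abs]])
  also have "\<dots> \<le> \<rho> + (\<Sum>i\<in>(UNIV::'h set). \<rho> * C)"
    using comp_bounds[of \<theta>] assms
    by (intro add_mono sum_mono) (auto simp: abs_mult intro!: mult_mono order_trans[OF _ assms(1)])
  finally show ?thesis by simp
qed

lemma norm_vec_bound:
  assumes "\<And>i. norm (x $ i) \<le> B" shows "norm (x :: 'a::real_normed_vector^'n::finite) \<le> real CARD('n) * B"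
proof -
  have "norm x \<le> (\<Sum>i\<in>UNIV. norm (x $ i))"
    unfolding norm_vec_def by (rule L2_set_le_sum) simp
  also have "\<dots> \<le> (\<Sum>i\<in>(UNIV::'n set). B)" using assms by (intro sum_mono) auto
  finally show ?thesis by simp
qed

lemma DN_bound:
  fixes \<theta> :: "('d::finite,'h::finite) param"
  assumes "norm \<theta> \<le> \<rho>" "\<And>j. \<bar>y $ j\<bar> \<le> Y" "\<And>i. \<bar>act (zz \<theta> i y)\<bar> \<le> C" "\<And>i. \<bar>act' (zz \<theta> i y)\<bar> \<le> C"
  shows "norm (DN act act' \<theta> y) \<le> real CARD('h) * (real CARD('d) * (\<rho> * C * Y)) + real CARD('h) * (\<rho> * C) + real CARD('h) * C + 1"
proof -
  have C0: "C \<ge> 0" using assms(3) abs_ge_zero order_trans by blast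
  have r0: "\<rho> \<ge> 0" using assms(1) norm_ge_zero order_trans by blast
  have v: "\<bar>vV \<theta> i\<bar> \<le> \<rho>" for i using comp_bounds[of \<theta>] assms(1) by (meson order_trans)
  have n1: "norm (\<chi> i. \<chi> j. vV \<theta> i * act' (zz \<theta> i y) * y $ j) \<le> real CARD('h) * (real CARD('d) * (\<rho> * C * Y))"
    by (intro norm_vec_bound) (auto simp: abs_mult v assms C0 r0 intro!: mult_mono)
  have n2: "norm (\<chi> i. vV \<theta> i * act' (zz \<theta> i y)) \<le> real CARD('h) * (\<rho> * C)"
    by (intro norm_vec_bound) (auto simp: abs_mult v assms C0 r0 intro!: mult_mono)
  have n3: "norm (\<chi> i. act (zz \<theta> i y)) \<le> real CARD('h) * C"
    by (intro norm_vec_bound) (auto simp: assms)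
  have "norm (DN act act' \<theta> y) \<le> norm (\<chi> i. \<chi> j. vV \<theta> i * act' (zz \<theta> i y) * y $ j) +
      (norm (\<chi> i. vV \<theta> i * act' (zz \<theta> i y)) + (norm (\<chi> i. act (zz \<theta> i y)) + norm (1::real)))"
    unfolding DN_def by (meson norm_Pair_le add_left_mono order_trans)
  then show ?thesis using n1 n2 n3 by simp
qed

definition gi :: "(real^'d \<Rightarrow> real) \<Rightarrow> (real\<Rightarrow>real) \<Rightarrow> (real\<Rightarrow>real) \<Rightarrow> ('d::finite,'h::finite) param \<Rightarrow> real^'d \<Rightarrow> ('d,'h) param" where
  "gi f act act' \<theta> y = (-2 * (f y - realis act \<theta> y)) *\<^sub>R DN act act' \<theta> y"

lemma gi_bound:
  fixes \<theta> :: "('d::finite,'h::finite) param"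
  assumes "norm \<theta> \<le> \<rho>" "\<And>j. \<bar>y $ j\<bar> \<le> Y" "\<And>i. \<bar>act (zz \<theta> i y)\<bar> \<le> C" "\<And>i. \<bar>act' (zz \<theta> i y)\<bar> \<le> C"
    "\<bar>f y\<bar> \<le> Fm"
  shows "norm (gi f act act' \<theta> y) \<le> 2 * (Fm + (\<rho> + real CARD('h) * (\<rho> * C))) *
     (real CARD('h) * (real CARD('d) * (\<rho> * C * Y)) + real CARD('h) * (\<rho> * C) + real CARD('h) * C + 1)"
    and "(f y - realis act \<theta> y)\<^sup>2 \<le> (Fm + (\<rho> + real CARD('h) * (\<rho> * C)))\<^sup>2"
proof -
  have r: "\<bar>realis act \<theta> y\<bar> \<le> \<rho> + real CARD('h) * (\<rho> * C)" by (rule realis_bound) (use assms in auto)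
  have fr: "\<bar>f y - realis act \<theta> y\<bar> \<le> Fm + (\<rho> + real CARD('h) * (\<rho> * C))"
    using r assms(5) by linarith
  show "norm (gi f act act' \<theta> y) \<le> 2 * (Fm + (\<rho> + real CARD('h) * (\<rho> * C))) *
     (real CARD('h) * (real CARD('d) * (\<rho> * C * Y)) + real CARD('h) * (\<rho> * C) + real CARD('h) * C + 1)"
  proof -
    have dn: "norm (DN act act' \<theta> y) \<le> real CARD('h) * (real CARD('d) * (\<rho> * C * Y)) + real CARD('h) * (\<rho> * C) + real CARD('h) * C + 1"
      by (rule DN_bound) (use assms in auto)
    show ?thesis
    unfolding gi_def norm_scaleR using fr dn
    by (auto simp: abs_mult intro!: mult_mono)
  qed
  show "(f y - realis act \<theta> y)\<^sup>2 \<le> (Fm + (\<rho> + real CARD('h) * (\<rho> * C)))\<^sup>2"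
    using fr by (metis abs_ge_zero power2_abs power_mono)
qed

lemma unif_cont:
  fixes H :: "'p::euclidean_space \<times> 'y::metric_space \<Rightarrow> 'z::real_normed_vector"
  assumes "continuous_on (UNIV \<times> S) H" "compact S" "\<epsilon> > 0"
  shows "\<exists>\<delta>>0. \<forall>\<theta>. norm (\<theta> - \<theta>0) < \<delta> \<longrightarrow> (\<forall>y\<in>S. norm (H (\<theta>,y) - H (\<theta>0,y)) \<le> \<epsilon>)"
proof -
  have "uniformly_continuous_on (cball \<theta>0 1 \<times> S) H"
    by (intro compact_uniformly_continuous compact_Times compact_cball assms(2)
        continuous_on_subset[OF assms(1)]) auto
  then obtain d where d: "d > 0" "\<And>x x'. x \<in> cball \<theta>0 1 \<times> S \<Longrightarrow> x' \<in> cball \<theta>0 1 \<times> S \<Longrightarrow> dist x' x < d \<Longrightarrow> dist (H x') (H x) < \<epsilon>"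
    unfolding uniformly_continuous_on_def using assms(3) by metis
  show ?thesis
  proof (intro exI[of _ "min d 1"] conjI allI impI ballI)
    fix \<theta> y assume th: "norm (\<theta> - \<theta>0) < min d 1" and y: "y \<in> S"
    have "dist (H (\<theta>, y)) (H (\<theta>0, y)) < \<epsilon>"
      using th y by (intro d(2)) (auto simp: dist_Pair_Pair dist_norm norm_minus_commute)
    then show "norm (H (\<theta>, y) - H (\<theta>0, y)) \<le> \<epsilon>" by (simp add: dist_norm)
  qed (use d in auto)
qed

locale netsetting =
  fixes a b :: real and f :: "real^'d::finite \<Rightarrow> real" and R :: "nat \<Rightarrow> real \<Rightarrow> real"
    and \<mu> :: "(real^'d) measure"
  assumes ab: "a < b"
    and f_cont: "continuous_on (cube a b) f"
    and R_diff: "\<forall>r\<ge>1. \<forall>x. R r differentiable (at x)"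
    and R_C1: "\<forall>r\<ge>1. continuous_on UNIV (deriv (R r))"
    and R_lim: "\<forall>x. (\<lambda>r. \<bar>R r x - relu x\<bar> + \<bar>deriv (R r) x - indicator {0<..} x\<bar>) \<longlonglongrightarrow> 0"
    and R_bd: "\<forall>x. \<exists>C. \<forall>r\<ge>1. \<forall>y\<in>{-\<bar>x\<bar>..\<bar>x\<bar>}. \<bar>deriv (R r) y\<bar> \<le> C"
    and mu_sets: "sets \<mu> = sets (restrict_space borel (cube a b))"
    and mu_fin: "finite_measure \<mu>"
begin

lemma space_mu: "space \<mu> = cube a b"
  using sets_eq_imp_space_eq[OF mu_sets] by (simp add: space_restrict_space)

lemma meas_cont: "continuous_on (cube a b) g \<Longrightarrow> g \<in> borel_measurable \<mu>"
  by (subst measurable_cong_sets[OF mu_sets refl]) (rule borel_measurable_continuous_on_restrict)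

lemma int_cont:
  fixes g :: "real^'d \<Rightarrow> 'b::{banach,second_countable_topology}"
  assumes "continuous_on (cube a b) g" shows "integrable \<mu> g"
proof -
  interpret finite_measure \<mu> by (rule mu_fin)
  have "bounded (g ` cube a b)" by (intro compact_imp_bounded compact_continuous_image assms compact_cube)
  then obtain B where "\<forall>x\<in>g ` cube a b. norm x \<le> B" by (auto simp: bounded_iff)
  then show ?thesis
    by (intro integrable_const_bound[where B=B] meas_cont assms) (auto simp: space_mu)
qed

definition "Yb = \<bar>a\<bar> + \<bar>b\<bar>"

lemma Yb: assumes "y \<in> cube a b" shows "\<bar>y $ j\<bar> \<le> Yb"
proof -
  have "a \<le> y $ j" "y $ j \<le> b" using assms by (auto simp: cube_def)
  then show ?thesis unfolding Yb_def by arith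
qed

lemma Fm: "\<exists>Fm. \<forall>y\<in>cube a b. \<bar>f y\<bar> \<le> Fm"
proof -
  have "bounded (f ` cube a b)" by (intro compact_imp_bounded compact_continuous_image f_cont compact_cube)
  then show ?thesis by (auto simp: bounded_iff)
qed

lemma R_deriv: "r \<ge> 1 \<Longrightarrow> (R r has_real_derivative deriv (R r) z) (at z)"
  using R_diff DERIV_deriv_iff_real_differentiable by blast

lemma R_cont: "r \<ge> 1 \<Longrightarrow> continuous_on UNIV (R r)"
  using R_diff by (meson differentiable_at_imp_differentiable_on differentiable_imp_continuous_on)

lemma R_tends: "(\<lambda>r. R r x) \<longlonglongrightarrow> relu x" "(\<lambda>r. deriv (R r) x) \<longlonglongrightarrow> indicator {0<..} x"
proof -
  have l: "(\<lambda>r. \<bar>R r x - relu x\<bar> + \<bar>deriv (R r) x - indicator {0<..} x\<bar>) \<longlonglongrightarrow> 0" using R_lim by blast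
  have "(\<lambda>r. R r x - relu x) \<longlonglongrightarrow> 0"
    by (rule Lim_null_comparison[OF _ l]) auto
  then show "(\<lambda>r. R r x) \<longlonglongrightarrow> relu x" by (simp add: LIM_zero_iff)
  have "(\<lambda>r. deriv (R r) x - indicator {0<..} x) \<longlonglongrightarrow> 0"
    by (rule Lim_null_comparison[OF _ l]) auto
  then show "(\<lambda>r. deriv (R r) x) \<longlonglongrightarrow> indicator {0<..} x" by (simp add: LIM_zero_iff)
qed

lemma R_bounds: "\<exists>C. \<forall>r\<ge>1. \<forall>z. \<bar>z\<bar> \<le> Z \<longrightarrow> \<bar>R r z\<bar> \<le> C \<and> \<bar>deriv (R r) z\<bar> \<le> C"
proof -
  obtain C1 where C1: "\<And>r y. r \<ge> 1 \<Longrightarrow> y \<in> {-\<bar>Z\<bar>..\<bar>Z\<bar>} \<Longrightarrow> \<bar>deriv (R r) y\<bar> \<le> C1"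
    using R_bd by blast
  have "convergent (\<lambda>r. R r 0)" using R_tends(1) by (auto simp: convergent_def)
  then obtain A where A: "\<And>r. \<bar>R r 0\<bar> \<le> A" by (metis BseqE convergent_imp_Bseq real_norm_def)
  have "\<bar>R r z\<bar> \<le> A + C1 * \<bar>Z\<bar>" if "r \<ge> 1" "\<bar>z\<bar> \<le> Z" for r z
  proof -
    have "norm (R r z - R r 0) \<le> C1 * norm (z - 0)"
    proof (rule field_differentiable_bound[where S="{-\<bar>Z\<bar>..\<bar>Z\<bar>}"])
      show "convex {-\<bar>Z\<bar>..\<bar>Z\<bar>}" by simp
      show "(R r has_field_derivative deriv (R r) x) (at x within {-\<bar>Z\<bar>..\<bar>Z\<bar>})" for x
        using R_deriv[OF that(1)] by (rule has_field_derivative_at_within)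
      show "norm (deriv (R r) x) \<le> C1" if "x \<in> {-\<bar>Z\<bar>..\<bar>Z\<bar>}" for x using C1[OF \<open>r\<ge>1\<close> that] by simp
    qed (use that in auto)
    moreover have "C1 * \<bar>z\<bar> \<le> C1 * \<bar>Z\<bar>"
    proof -
      have "C1 \<ge> 0" using C1[OF that(1), of 0] by auto
      then show ?thesis using that by (intro mult_left_mono) auto
    qed
    ultimately show ?thesis using A[of r] by simp
  qed
  moreover have "\<bar>deriv (R r) z\<bar> \<le> C1" if "r \<ge> 1" "\<bar>z\<bar> \<le> Z" for r z
    using that(2) by (intro C1[OF that(1)]) (auto simp: abs_le_iff)
  ultimately show ?thesis
    by (intro exI[of _ "max C1 (A + C1 * \<bar>Z\<bar>)"]) force
qed

lemma uniform_bounds: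
  "\<exists>B. \<forall>\<theta>::('d,'h::finite) param. norm \<theta> \<le> \<rho> \<longrightarrow> (\<forall>y\<in>cube a b.
      (\<forall>r\<ge>1. norm (gi f (R r) (deriv (R r)) \<theta> y) \<le> B \<and> (f y - realis (R r) \<theta> y)\<^sup>2 \<le> B) \<and>
      norm (gi f relu (indicator {0<..}) \<theta> y) \<le> B \<and> (f y - realis relu \<theta> y)\<^sup>2 \<le> B)"
proof -
  define Z where "Z = \<rho> + real CARD('d) * (\<rho> * Yb)"
  obtain C where C: "\<And>r z. r \<ge> 1 \<Longrightarrow> \<bar>z\<bar> \<le> Z \<Longrightarrow> \<bar>R r z\<bar> \<le> C \<and> \<bar>deriv (R r) z\<bar> \<le> C"
    using R_bounds[of Z] by blast
  obtain Fm where Fm: "\<And>y. y \<in> cube a b \<Longrightarrow> \<bar>f y\<bar> \<le> Fm" using Fm by blast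
  define C' where "C' = max C (\<bar>Z\<bar> + 1)"
  define B1 where "B1 = 2 * (Fm + (\<rho> + real CARD('h) * (\<rho> * C'))) *
     (real CARD('h) * (real CARD('d) * (\<rho> * C' * Yb)) + real CARD('h) * (\<rho> * C') + real CARD('h) * C' + 1)"
  define B2 where "B2 = (Fm + (\<rho> + real CARD('h) * (\<rho> * C')))\<^sup>2"
  show ?thesis
  proof (intro exI[of _ "max B1 B2"] allI impI ballI conjI)
    fix \<theta> :: "('d,'h) param" and y :: "real^'d" assume th: "norm \<theta> \<le> \<rho>" and y: "y \<in> cube a b"
    have z: "\<bar>zz \<theta> i y\<bar> \<le> Z" for i unfolding Z_def by (rule zz_bound) (use th Yb[OF y] in auto)
    {
      fix r :: nat assume r: "r \<ge> 1"
      have c1: "\<bar>R r (zz \<theta> i y)\<bar> \<le> C'" "\<bar>deriv (R r) (zz \<theta> i y)\<bar> \<le> C'" for i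
        using C[OF r z[of i]] unfolding C'_def by auto
      have "norm (gi f (R r) (deriv (R r)) \<theta> y) \<le> B1" unfolding B1_def
        by (rule gi_bound(1)) (use th Yb[OF y] c1 Fm[OF y] in auto)
      then show "norm (gi f (R r) (deriv (R r)) \<theta> y) \<le> max B1 B2" by simp
      have "(f y - realis (R r) \<theta> y)\<^sup>2 \<le> B2" unfolding B2_def
        by (rule gi_bound(2)[where act'="deriv (R r)" and Y=Yb]) (use th Yb[OF y] c1 Fm[OF y] in auto)
      then show "(f y - realis (R r) \<theta> y)\<^sup>2 \<le> max B1 B2" by simp
    }
    have c2: "\<bar>relu (zz \<theta> i y)\<bar> \<le> C'" "\<bar>indicator {0<..} (zz \<theta> i y)\<bar> \<le> C'" for i
      using z[of i] unfolding C'_def relu_def by (auto simp: indicator_def)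
    have "norm (gi f relu (indicator {0<..}) \<theta> y) \<le> B1" unfolding B1_def
      by (rule gi_bound(1)) (use th Yb[OF y] c2 Fm[OF y] in auto)
    then show "norm (gi f relu (indicator {0<..}) \<theta> y) \<le> max B1 B2" by simp
    have "(f y - realis relu \<theta> y)\<^sup>2 \<le> B2" unfolding B2_def
      by (rule gi_bound(2)[where act'="indicator {0<..}" and Y=Yb]) (use th Yb[OF y] c2 Fm[OF y] in auto)
    then show "(f y - realis relu \<theta> y)\<^sup>2 \<le> max B1 B2" by simp
  qed
qed

lemma cont_comp_UNIV: "continuous_on UNIV h \<Longrightarrow> continuous_on S g \<Longrightarrow> continuous_on S (\<lambda>x. h (g x))"
  by (rule continuous_on_compose2) auto

lemma gi_cont_joint:
  assumes "continuous_on UNIV act" "continuous_on UNIV act'"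
  shows "continuous_on (UNIV \<times> cube a b) (\<lambda>p. gi f act act' (fst p :: ('d,'h::finite) param) (snd p))"
    and "continuous_on (UNIV \<times> cube a b) (\<lambda>p. (f (snd p) - realis act (fst p :: ('d,'h::finite) param) (snd p))\<^sup>2)"
proof -
  have fc: "continuous_on (UNIV \<times> cube a b) (\<lambda>p. f (snd p))"
    by (rule continuous_on_compose2[OF f_cont continuous_on_snd]) auto
  show "continuous_on (UNIV \<times> cube a b) (\<lambda>p. gi f act act' (fst p :: ('d,'h::finite) param) (snd p))"
    unfolding gi_def realis_unf DN_def zz_def wW_def bB_def vV_def cC_def
    by (intro continuous_intros fc cont_comp_UNIV[OF assms(1)] cont_comp_UNIV[OF assms(2)])
  show "continuous_on (UNIV \<times> cube a b) (\<lambda>p. (f (snd p) - realis act (fst p :: ('d,'h::finite) param) (snd p))\<^sup>2)"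
    unfolding gi_def realis_unf DN_def zz_def wW_def bB_def vV_def cC_def
    by (intro continuous_intros fc cont_comp_UNIV[OF assms(1)] cont_comp_UNIV[OF assms(2)])
qed

lemma cont_slice:
  assumes "continuous_on (UNIV \<times> cube a b) (\<lambda>p. H (fst p) (snd p))"
  shows "continuous_on (cube a b) (H \<theta>)"
  by (rule continuous_on_compose2[OF assms, where f="\<lambda>y. (\<theta>, y)", simplified])
    (auto intro!: continuous_intros)

lemma risk_deriv:
  fixes \<theta>0 :: "('d,'h::finite) param"
  assumes r: "r \<ge> 1"
  shows "(risk \<mu> f (R r) has_derivative (\<lambda>h. (\<integral>y. gi f (R r) (deriv (R r)) \<theta>0 y \<partial>\<mu>) \<bullet> h)) (at \<theta>0)"
    and "continuous (at \<theta>0) (\<lambda>\<theta>. \<integral>y. gi f (R r) (deriv (R r)) (\<theta>::('d,'h) param) y \<partial>\<mu>)"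
proof -
  have rf: "risk \<mu> f (R r) = (\<lambda>\<theta>. \<integral>y. (f y - realis (R r) (\<theta>::('d,'h) param) y)\<^sup>2 \<partial>\<mu>)"
    by (simp add: risk_def fun_eq_iff)
  note jc = gi_cont_joint[OF R_cont[OF r] R_C1[rule_format, OF r]]
  have der: "((\<lambda>\<theta>. (f y - realis (R r) \<theta> y)\<^sup>2) has_derivative (\<lambda>h. gi f (R r) (deriv (R r)) \<theta> y \<bullet> h)) (at \<theta>)"
    for \<theta> :: "('d,'h) param" and y
  proof -
    have "((\<lambda>\<theta>. (f y - realis (R r) \<theta> y)^2) has_derivative
        (\<lambda>h. of_nat 2 * (0 - DN (R r) (deriv (R r)) \<theta> y \<bullet> h) * (f y - realis (R r) \<theta> y)^(2-1))) (at \<theta>)"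
      by (intro has_derivative_power has_derivative_diff has_derivative_const realis_deriv R_deriv r)
    then show ?thesis
      by (rule has_derivative_eq_rhs) (simp add: gi_def fun_eq_iff algebra_simps)
  qed
  have unif: "\<exists>\<delta>>0. \<forall>\<theta>. norm (\<theta> - \<theta>0) < \<delta> \<longrightarrow> (\<forall>y\<in>space \<mu>. norm (gi f (R r) (deriv (R r)) \<theta> y - gi f (R r) (deriv (R r)) \<theta>0 y) \<le> \<epsilon>)"
    if "\<epsilon> > 0" for \<epsilon>
    using unif_cont[OF jc(1) compact_cube that, of \<theta>0] by (simp add: space_mu)
  note * = integral_has_derivative[where M=\<mu> and F="\<lambda>\<theta> y. (f y - realis (R r) \<theta> y)\<^sup>2"
      and F'="gi f (R r) (deriv (R r))", OF mu_fin der int_cont[OF cont_slice[OF jc(2)]]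
      int_cont[OF cont_slice[OF jc(1)]] unif]
  show "(risk \<mu> f (R r) has_derivative (\<lambda>h. (\<integral>y. gi f (R r) (deriv (R r)) \<theta>0 y \<partial>\<mu>) \<bullet> h)) (at \<theta>0)"
    unfolding rf by (rule *(1))
  show "continuous (at \<theta>0) (\<lambda>\<theta>. \<integral>y. gi f (R r) (deriv (R r)) (\<theta>::('d,'h) param) y \<partial>\<mu>)"
    by (rule *(2))
qed

lemma gi_pt_lim:
  "(\<lambda>r. gi f (R r) (deriv (R r)) (\<theta>::('d,'h::finite) param) y) \<longlonglongrightarrow> gi f relu (indicator {0<..}) \<theta> y"
  "(\<lambda>r. (f y - realis (R r) (\<theta>::('d,'h::finite) param) y)\<^sup>2) \<longlonglongrightarrow> (f y - realis relu \<theta> y)\<^sup>2"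
  unfolding gi_def realis_unf DN_def
  by (intro tendsto_intros R_tends)+

lemma limits:
  fixes \<theta> :: "('d,'h::finite) param"
  shows "gi f relu (indicator {0<..}) \<theta> \<in> borel_measurable \<mu>"
    and "integrable \<mu> (gi f relu (indicator {0<..}) \<theta>)"
    and "(\<lambda>r. \<integral>y. gi f (R r) (deriv (R r)) \<theta> y \<partial>\<mu>) \<longlonglongrightarrow> (\<integral>y. gi f relu (indicator {0<..}) \<theta> y \<partial>\<mu>)"
    and "(\<lambda>r. risk \<mu> f (R r) \<theta>) \<longlonglongrightarrow> risk \<mu> f relu \<theta>"
    and "integrable \<mu> (\<lambda>y. (f y - realis relu \<theta> y)\<^sup>2)"
proof -
  interpret finite_measure \<mu> by (rule mu_fin)
  obtain B where B: "\<And>y r. y \<in> cube a b \<Longrightarrow> r \<ge> 1 \<Longrightarrow> norm (gi f (R r) (deriv (R r)) \<theta> y) \<le> B \<and> (f y - realis (R r) \<theta> y)\<^sup>2 \<le> B"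
    using uniform_bounds[of "norm \<theta>"] by blast
  have jc: "continuous_on (UNIV \<times> cube a b) (\<lambda>p. gi f (R (Suc r)) (deriv (R (Suc r))) (fst p :: ('d,'h::finite) param) (snd p))"
    "continuous_on (UNIV \<times> cube a b) (\<lambda>p. (f (snd p) - realis (R (Suc r)) (fst p :: ('d,'h::finite) param) (snd p))\<^sup>2)" for r
    using gi_cont_joint[OF R_cont[of "Suc r"] R_C1[rule_format, of "Suc r"]] by auto
  have m1: "(\<lambda>y. gi f (R (Suc r)) (deriv (R (Suc r))) \<theta> y) \<in> borel_measurable \<mu>" for r
    by (rule meas_cont[OF cont_slice[OF jc(1)]])
  have m2: "(\<lambda>y. (f y - realis (R (Suc r)) \<theta> y)\<^sup>2) \<in> borel_measurable \<mu>" for r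
    using meas_cont[OF cont_slice[OF jc(2)]] by simp
  have l1: "(\<lambda>r. gi f (R (Suc r)) (deriv (R (Suc r))) \<theta> y) \<longlonglongrightarrow> gi f relu (indicator {0<..}) \<theta> y" for y
    by (rule LIMSEQ_Suc[OF gi_pt_lim(1)])
  have l2: "(\<lambda>r. (f y - realis (R (Suc r)) \<theta> y)\<^sup>2) \<longlonglongrightarrow> (f y - realis relu \<theta> y)\<^sup>2" for y
    by (rule LIMSEQ_Suc[OF gi_pt_lim(2)])
  show gm: "gi f relu (indicator {0<..}) \<theta> \<in> borel_measurable \<mu>"
    by (rule borel_measurable_LIMSEQ_metric[OF m1 l1])
  have rm: "(\<lambda>y. (f y - realis relu \<theta> y)\<^sup>2) \<in> borel_measurable \<mu>"
    by (rule borel_measurable_LIMSEQ_metric[OF m2 l2])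
  have bd1: "AE y in \<mu>. norm (gi f (R (Suc r)) (deriv (R (Suc r))) \<theta> y) \<le> B" for r
    using B by (auto simp: space_mu)
  have bd2: "AE y in \<mu>. norm ((f y - realis (R (Suc r)) \<theta> y)\<^sup>2) \<le> B" for r
    using B by (auto simp: space_mu)
  show "integrable \<mu> (gi f relu (indicator {0<..}) \<theta>)"
    by (rule integrable_dominated_convergence[where s="\<lambda>r y. gi f (R (Suc r)) (deriv (R (Suc r))) \<theta> y", OF gm m1 integrable_const]) (use l1 bd1 in auto)
  show "integrable \<mu> (\<lambda>y. (f y - realis relu \<theta> y)\<^sup>2)"
    by (rule integrable_dominated_convergence[where s="\<lambda>r y. (f y - realis (R (Suc r)) \<theta> y)\<^sup>2", OF rm m2 integrable_const]) (use l2 bd2 in auto)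
  have "(\<lambda>r. \<integral>y. gi f (R (Suc r)) (deriv (R (Suc r))) \<theta> y \<partial>\<mu>) \<longlonglongrightarrow> (\<integral>y. gi f relu (indicator {0<..}) \<theta> y \<partial>\<mu>)"
    by (rule integral_dominated_convergence[where s="\<lambda>r y. gi f (R (Suc r)) (deriv (R (Suc r))) \<theta> y", OF gm m1 integrable_const]) (use l1 bd1 in auto)
  then show "(\<lambda>r. \<integral>y. gi f (R r) (deriv (R r)) \<theta> y \<partial>\<mu>) \<longlonglongrightarrow> (\<integral>y. gi f relu (indicator {0<..}) \<theta> y \<partial>\<mu>)"
    by (rule LIMSEQ_imp_Suc)
  have "(\<lambda>r. \<integral>y. (f y - realis (R (Suc r)) \<theta> y)\<^sup>2 \<partial>\<mu>) \<longlonglongrightarrow> (\<integral>y. (f y - realis relu \<theta> y)\<^sup>2 \<partial>\<mu>)"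
    by (rule integral_dominated_convergence[where s="\<lambda>r y. (f y - realis (R (Suc r)) \<theta> y)\<^sup>2", OF rm m2 integrable_const]) (use l2 bd2 in auto)
  then show "(\<lambda>r. risk \<mu> f (R r) \<theta>) \<longlonglongrightarrow> risk \<mu> f relu \<theta>"
    unfolding risk_def by (rule LIMSEQ_imp_Suc)
qed

lemma relu_cont: "continuous_on UNIV relu"
  unfolding relu_def by (intro continuous_intros)

lemma key_ineq:
  fixes \<theta> :: "('d,'h::finite) param"
  shows "risk \<mu> f relu \<theta> \<le> (\<integral>x. (f x - \<xi>)\<^sup>2 \<partial>\<mu>) + (norm \<theta> + \<bar>\<xi>\<bar>) * norm (\<integral>y. gi f relu (indicator {0<..}) \<theta> y \<partial>\<mu>)"
proof -
  define g where "g = gi f relu (indicator {0<..}) \<theta>"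
  define Gv where "Gv = (\<integral>y. g y \<partial>\<mu>)"
  define N where "N y = realis relu \<theta> y" for y
  obtain w bb v c where th: "\<theta> = (w, bb, v, c)" by (cases \<theta> rule: prod_cases4)
  define pr :: "('d,'h) param" where "pr = (0, 0, v, c)"
  define e1 :: "('d,'h) param" where "e1 = (0, 0, 0, 1)"
  have gint: "integrable \<mu> g" unfolding g_def by (rule limits(2))
  have Nc: "continuous_on (cube a b) N"
    unfolding N_def realis_unf zz_def
    by (intro continuous_intros cont_comp_UNIV[OF relu_cont])
  have fc: "continuous_on (cube a b) f" by (rule f_cont)
  have pd: "pr \<bullet> DN relu (indicator {0<..}) \<theta> y = N y" for y
    unfolding pr_def N_def realis_unf by (simp add: DN_def inner_vec_def th vV_def cC_def)
  have c1: "pr \<bullet> g y = -2 * (f y - N y) * N y" for y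
    unfolding g_def gi_def inner_scaleR_right pd by (simp add: N_def)
  have c2: "e1 \<bullet> g y = -2 * (f y - N y)" for y
    unfolding g_def gi_def e1_def N_def by (simp add: DN_def)
  have int1: "integrable \<mu> (\<lambda>y. (f y - \<xi>)\<^sup>2)"
    by (intro int_cont continuous_intros fc)
  have int2: "integrable \<mu> (\<lambda>y. (f y - N y)\<^sup>2)"
    by (intro int_cont continuous_intros fc Nc)
  have int3: "integrable \<mu> (\<lambda>y. pr \<bullet> g y)" "integrable \<mu> (\<lambda>y. \<xi> * (e1 \<bullet> g y))"
    using gint by auto
  have "(\<integral>y. (f y - N y)\<^sup>2 - pr \<bullet> g y + \<xi> * (e1 \<bullet> g y) \<partial>\<mu>) \<le> (\<integral>x. (f x - \<xi>)\<^sup>2 \<partial>\<mu>)"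
  proof (rule integral_mono)
    show "integrable \<mu> (\<lambda>y. (f y - N y)\<^sup>2 - pr \<bullet> g y + \<xi> * (e1 \<bullet> g y))"
      using int2 int3 by auto
    show "integrable \<mu> (\<lambda>y. (f y - \<xi>)\<^sup>2)" by (rule int1)
    fix y
    have "(f y - \<xi>)\<^sup>2 - ((f y - N y)\<^sup>2 - pr \<bullet> g y + \<xi> * (e1 \<bullet> g y)) = (N y - \<xi>)\<^sup>2"
      unfolding c1 c2 by (simp add: power2_eq_square algebra_simps)
    then show "(f y - N y)\<^sup>2 - pr \<bullet> g y + \<xi> * (e1 \<bullet> g y) \<le> (f y - \<xi>)\<^sup>2"
      by (smt (verit) zero_le_power2)
  qed
  moreover have "(\<integral>y. (f y - N y)\<^sup>2 - pr \<bullet> g y + \<xi> * (e1 \<bullet> g y) \<partial>\<mu>) = risk \<mu> f relu \<theta> - pr \<bullet> Gv + \<xi> * (e1 \<bullet> Gv)"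
    using int2 int3 gint unfolding Gv_def risk_def N_def by simp
  moreover have "pr \<bullet> Gv \<le> norm \<theta> * norm Gv"
  proof -
    have "norm pr = norm (v, c)" unfolding pr_def by (simp add: norm_Pair)
    also have "\<dots> \<le> norm \<theta>" unfolding th by (meson norm_snd_le order_trans)
    finally have "norm pr \<le> norm \<theta>" .
    then show ?thesis
      by (meson Cauchy_Schwarz_ineq2 abs_le_D1 mult_right_mono norm_ge_zero order_trans)
  qed
  moreover have "- (\<xi> * (e1 \<bullet> Gv)) \<le> \<bar>\<xi>\<bar> * norm Gv"
  proof -
    have "norm e1 = 1" unfolding e1_def by (simp add: norm_Pair)
    then have "\<bar>e1 \<bullet> Gv\<bar> \<le> norm Gv" using Cauchy_Schwarz_ineq2[of e1 Gv] by simp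
    then have "\<bar>\<xi> * (e1 \<bullet> Gv)\<bar> \<le> \<bar>\<xi>\<bar> * norm Gv" by (simp add: abs_mult mult_left_mono)
    then show ?thesis by linarith
  qed
  ultimately show ?thesis unfolding Gv_def g_def by (simp add: algebra_simps)
qed

end

lemma chain_flow:
  fixes F :: "'p::euclidean_space \<Rightarrow> real" and DF :: "'p \<Rightarrow> 'p" and g :: "real \<Rightarrow> 'p" and Th :: "real \<Rightarrow> 'p"
  assumes der: "\<And>x. (F has_derivative (\<lambda>h. DF x \<bullet> h)) (at x)"
    and DFc: "\<And>x. isCont DF x"
    and Thc: "continuous_on UNIV Th"
    and gint: "\<And>t. g integrable_on {0..t}"
    and gbd: "\<And>T. \<exists>B. \<forall>s\<in>{0..T}. norm (g s) \<le> B"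
    and flow: "\<And>t. t \<ge> 0 \<Longrightarrow> Th t = Th 0 - integral {0..t} g"
    and hint: "\<And>t. (\<lambda>s. DF (Th s) \<bullet> g s) integrable_on {0..t}"
    and t: "t \<ge> 0"
  shows "F (Th t) = F (Th 0) - integral {0..t} (\<lambda>s. DF (Th s) \<bullet> g s)"
proof -
  define h where "h s = DF (Th s) \<bullet> g s" for s
  define \<psi> where "\<psi> t = F (Th t) + integral {0..t} h" for t
  have step: "\<exists>d>0. \<forall>p q. 0 \<le> p \<longrightarrow> p \<le> q \<longrightarrow> \<bar>p - t0\<bar> < d \<longrightarrow> \<bar>q - t0\<bar> < d \<longrightarrow>
      \<bar>\<psi> q - \<psi> p\<bar> \<le> e * (q - p)" if t0: "t0 \<ge> 0" and e: "e > 0" for t0 e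
  proof -
    obtain B where B: "\<And>s. s \<in> {0..t0+1} \<Longrightarrow> norm (g s) \<le> B" using gbd by blast
    have B0: "B \<ge> 0" using B[of t0] t0 by (auto intro: order_trans[OF norm_ge_zero])
    define \<epsilon> where "\<epsilon> = e / (2 * (B + 1))"
    have \<epsilon>: "\<epsilon> > 0" unfolding \<epsilon>_def using e B0 by simp
    have eB: "2 * \<epsilon> * B \<le> e"
    proof -
      have "2 * \<epsilon> * (B + 1) = e" unfolding \<epsilon>_def using B0 by (simp add: field_simps)
      then show ?thesis using \<epsilon> by (smt (verit) mult_left_mono)
    qed
    obtain r where r: "r > 0" "\<And>x. dist x (Th t0) < r \<Longrightarrow> dist (DF x) (DF (Th t0)) < \<epsilon>"
      using DFc[of "Th t0", unfolded continuous_at_eps_delta] \<epsilon> by metis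
    obtain d1 where d1: "d1 > 0" "\<And>s. dist s t0 < d1 \<Longrightarrow> dist (Th s) (Th t0) < r"
      using Thc[unfolded continuous_on_eq_continuous_at[OF open_UNIV], rule_format, of t0, unfolded continuous_at_eps_delta] r
      by (metis UNIV_I)
    define E where "E x = F x - DF (Th t0) \<bullet> x" for x
    have Ebound: "norm (E x - E y) \<le> \<epsilon> * norm (x - y)" if "x \<in> ball (Th t0) r" "y \<in> ball (Th t0) r" for x y
    proof (rule differentiable_bound[where S="ball (Th t0) r" and f'="\<lambda>x h. DF x \<bullet> h - DF (Th t0) \<bullet> h"])
      show "(E has_derivative (\<lambda>h. DF x \<bullet> h - DF (Th t0) \<bullet> h)) (at x within ball (Th t0) r)" for x
        unfolding E_def
        by (intro has_derivative_diff has_derivative_at_withinI[OF der] bounded_linear_imp_has_derivative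
            bounded_linear_inner_right)
      show "onorm (\<lambda>h. DF x \<bullet> h - DF (Th t0) \<bullet> h) \<le> \<epsilon>" if "x \<in> ball (Th t0) r" for x
      proof (rule onorm_le)
        fix h
        have "norm (DF x \<bullet> h - DF (Th t0) \<bullet> h) = \<bar>(DF x - DF (Th t0)) \<bullet> h\<bar>" by (simp add: inner_diff_left)
        also have "\<dots> \<le> norm (DF x - DF (Th t0)) * norm h" by (rule Cauchy_Schwarz_ineq2)
        also have "\<dots> \<le> \<epsilon> * norm h"
          using r(2)[of x] that by (intro mult_right_mono) (auto simp: dist_norm norm_minus_commute)
        finally show "norm (DF x \<bullet> h - DF (Th t0) \<bullet> h) \<le> \<epsilon> * norm h" .
      qed
    qed (use that in auto)
    show ?thesis
    proof (intro exI[of _ "min d1 1"] conjI allI impI)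
      show "min d1 1 > 0" using d1 by simp
      fix p q assume p0: "0 \<le> p" and pq: "p \<le> q" and pd: "\<bar>p - t0\<bar> < min d1 1" and qd: "\<bar>q - t0\<bar> < min d1 1"
      have inball: "Th u \<in> ball (Th t0) r" if "\<bar>u - t0\<bar> < min d1 1" for u
        using d1(2)[of u] that by (auto simp: dist_real_def dist_commute)
      have gpq: "g integrable_on {p..q}" by (rule integrable_subinterval_real[OF gint[of q]]) (use p0 in auto)
      have hpq: "h integrable_on {p..q}" unfolding h_def by (rule integrable_subinterval_real[OF hint[of q]]) (use p0 in auto)
      have Thd: "Th q - Th p = - integral {p..q} g"
      proof -
        have "Th q - Th p = (Th 0 - integral {0..q} g) - (Th 0 - integral {0..p} g)"
          using flow[of p] flow[of q] p0 pq by simp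
        also have "integral {0..q} g = integral {0..p} g + integral {p..q} g"
          using Henstock_Kurzweil_Integration.integral_combine[OF p0 pq gint[of q]] by simp
        finally show ?thesis by (simp add: algebra_simps)
      qed
      have Id: "integral {0..q} h - integral {0..p} h = integral {p..q} h"
        using Henstock_Kurzweil_Integration.integral_combine[OF p0 pq hint[of q, folded h_def]] by (simp add: algebra_simps)
      have Bpq: "norm (g u) \<le> B" if "u \<in> {p..q}" for u
        using that p0 qd by (intro B) auto
      have Thn: "norm (Th q - Th p) \<le> B * (q - p)"
      proof -
        have "norm (integral {p..q} g) \<le> integral {p..q} (\<lambda>_. B)"
          by (rule integral_norm_bound_integral[OF gpq]) (use Bpq in auto)
        then show ?thesis unfolding Thd using pq by (simp add: mult.commute)
      qed
      have lin: "DF (Th t0) \<bullet> integral {p..q} g = integral {p..q} (\<lambda>u. DF (Th t0) \<bullet> g u)"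
        using integral_linear[OF gpq bounded_linear_inner_right[of "DF (Th t0)"]] by (simp add: o_def)
      have "\<psi> q - \<psi> p = (E (Th q) - E (Th p)) + (DF (Th t0) \<bullet> (Th q - Th p) + integral {p..q} h)"
        unfolding \<psi>_def E_def using Id by (simp add: inner_diff_right algebra_simps)
      also have "DF (Th t0) \<bullet> (Th q - Th p) + integral {p..q} h = integral {p..q} (\<lambda>u. (DF (Th u) - DF (Th t0)) \<bullet> g u)"
        unfolding Thd inner_minus_right lin h_def
        using integral_diff[OF hpq[unfolded h_def] integrable_linear[OF gpq bounded_linear_inner_right[of "DF (Th t0)"], unfolded o_def]]
        by (simp add: inner_diff_left)
      finally have eq: "\<psi> q - \<psi> p = (E (Th q) - E (Th p)) + integral {p..q} (\<lambda>u. (DF (Th u) - DF (Th t0)) \<bullet> g u)" .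
      have i1: "\<bar>E (Th q) - E (Th p)\<bar> \<le> \<epsilon> * (B * (q - p))"
        using Ebound[OF inball[OF qd] inball[OF pd]] Thn \<epsilon> by (smt (verit) mult_left_mono real_norm_def)
      have i2: "\<bar>integral {p..q} (\<lambda>u. (DF (Th u) - DF (Th t0)) \<bullet> g u)\<bar> \<le> integral {p..q} (\<lambda>_. \<epsilon> * B)"
      proof (rule integral_norm_bound_integral[where f="\<lambda>u. (DF (Th u) - DF (Th t0)) \<bullet> g u", simplified])
        show "(\<lambda>u. (DF (Th u) - DF (Th t0)) \<bullet> g u) integrable_on {p..q}"
          using integrable_diff[OF hpq[unfolded h_def] integrable_linear[OF gpq bounded_linear_inner_right[of "DF (Th t0)"], unfolded o_def]]
          by (simp add: inner_diff_left)
        fix u assume u: "u \<in> {p..q}"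
        have "\<bar>u - t0\<bar> < min d1 1" using u pd qd by auto
        then have "Th u \<in> ball (Th t0) r" by (rule inball)
        then have "norm (DF (Th u) - DF (Th t0)) \<le> \<epsilon>" using r(2)[of "Th u"] by (auto simp: dist_norm norm_minus_commute)
        then show "\<bar>(DF (Th u) - DF (Th t0)) \<bullet> g u\<bar> \<le> \<epsilon> * B"
          using Cauchy_Schwarz_ineq2[of "DF (Th u) - DF (Th t0)" "g u"] Bpq[OF u]
          by (smt (verit) mult_mono norm_ge_zero)
      qed (rule integrable_const_ivl)
      have i2': "\<bar>integral {p..q} (\<lambda>u. (DF (Th u) - DF (Th t0)) \<bullet> g u)\<bar> \<le> \<epsilon> * B * (q - p)"
        using i2 pq by (simp add: mult.commute mult.left_commute)
      have "\<bar>\<psi> q - \<psi> p\<bar> \<le> \<epsilon> * (B * (q - p)) + \<epsilon> * B * (q - p)"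
        using abs_triangle_ineq[of "E (Th q) - E (Th p)" "integral {p..q} (\<lambda>u. (DF (Th u) - DF (Th t0)) \<bullet> g u)"] i1 i2'
        unfolding eq by linarith
      also have "\<dots> = (2 * \<epsilon> * B) * (q - p)" by (simp add: algebra_simps)
      also have "\<dots> \<le> e * (q - p)" using eB pq by (intro mult_right_mono) auto
      finally show "\<bar>\<psi> q - \<psi> p\<bar> \<le> e * (q - p)" .
    qed
  qed
  have "\<forall>x\<in>{0..}. (\<psi> has_derivative (\<lambda>h. 0)) (at x within {0..})"
  proof
    fix t0 :: real assume "t0 \<in> {0..}"
    then have t0: "t0 \<ge> 0" by simp
    show "(\<psi> has_derivative (\<lambda>h. 0)) (at t0 within {0..})"
      unfolding has_derivative_within_alt
    proof (intro conjI allI impI)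
      fix e :: real assume e: "e > 0"
      obtain d where d: "d > 0" "\<And>p q. 0 \<le> p \<Longrightarrow> p \<le> q \<Longrightarrow> \<bar>p - t0\<bar> < d \<Longrightarrow> \<bar>q - t0\<bar> < d \<Longrightarrow> \<bar>\<psi> q - \<psi> p\<bar> \<le> e * (q - p)"
        using step[OF t0 e] by blast
      show "\<exists>d>0. \<forall>y\<in>{0..}. norm (y - t0) < d \<longrightarrow> norm (\<psi> y - \<psi> t0 - 0) \<le> e * norm (y - t0)"
      proof (intro exI[of _ d] conjI ballI impI)
        fix y :: real assume y: "y \<in> {0..}" "norm (y - t0) < d"
        show "norm (\<psi> y - \<psi> t0 - 0) \<le> e * norm (y - t0)"
        proof (cases "t0 \<le> y")
          case True
          then show ?thesis using d(2)[of t0 y] t0 y d(1) by auto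
        next
          case False
          then show ?thesis using d(2)[of y t0] t0 y d(1) by (auto simp: abs_minus_commute)
        qed
      qed (use d in auto)
    qed (rule bounded_linear_zero)
  qed
  then obtain c where "\<forall>x\<in>{0..}. \<psi> x = c"
    using has_derivative_zero_constant[of "{0::real..}" \<psi>] by auto
  then have "\<psi> t = \<psi> 0" using t by auto
  then show ?thesis unfolding \<psi>_def h_def by simp
qed

lemma si_bdd:
  fixes h :: "real \<Rightarrow> 'b::{banach,second_countable_topology}"
  assumes "h \<in> borel_measurable borel" "\<And>s. s \<in> {0..t} \<Longrightarrow> norm (h s) \<le> B"
  shows "set_integrable lborel {0..t} h"
  unfolding set_integrable_def
  by (rule integrableI_bounded_set_indicator[where B=B]) (use assms in \<open>auto simp: emeasure_lborel_Icc_eq\<close>)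

lemma lint_FTC:
  fixes F f :: "real \<Rightarrow> real"
  assumes "0 \<le> T" "\<And>x. 0 \<le> x \<Longrightarrow> x \<le> T \<Longrightarrow> (F has_real_derivative f x) (at x)"
    and "continuous_on {0..T} f"
  shows "(\<integral>s\<in>{0..T}. f s \<partial>lborel) = F T - F 0"
  unfolding set_lebesgue_integral_def
  by (rule integral_FTC_atLeastAtMost[OF assms(1) _ assms(3)])
    (use assms(2) in \<open>auto simp: has_real_derivative_iff_has_vector_derivative[symmetric] intro: has_field_derivative_at_within\<close>)

lemma final_arg:
  fixes Lt :: "real \<Rightarrow> real" and Th :: "real \<Rightarrow> 'p::euclidean_space" and g :: "real \<Rightarrow> 'p" and q :: "real \<Rightarrow> real"
  assumes gm: "g \<in> borel_measurable borel"
    and gbd: "\<And>T. \<exists>B. \<forall>s\<in>{0..T}. norm (g s) \<le> B"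
    and flow: "\<And>t. t \<ge> 0 \<Longrightarrow> Th t = Th 0 - (\<integral>s\<in>{0..t}. g s \<partial>lborel)"
    and En: "\<And>t. t \<ge> 0 \<Longrightarrow> Lt t = Lt 0 - (\<integral>s\<in>{0..t}. (norm (g s))\<^sup>2 \<partial>lborel)"
    and Lnn: "\<And>t. t \<ge> 0 \<Longrightarrow> Lt t \<ge> 0"
    and key: "\<And>t \<xi>. t \<ge> 0 \<Longrightarrow> Lt t \<le> q \<xi> + (norm (Th t) + \<bar>\<xi>\<bar>) * norm (g t)"
    and qnn: "\<And>\<xi>. q \<xi> \<ge> 0"
  shows "Limsup at_top (\<lambda>t. ereal (Lt t)) \<le> ereal (INF \<xi>. q \<xi>)"
proof -
  define \<phi> where "\<phi> s = (norm (g s))\<^sup>2" for s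
  define I where "I t = (\<integral>s\<in>{0..t}. \<phi> s \<partial>lborel)" for t
  define L0 where "L0 = Lt 0"
  have L0: "L0 \<ge> 0" unfolding L0_def using Lnn by simp
  have \<phi>m: "\<phi> \<in> borel_measurable borel" unfolding \<phi>_def using gm by measurable
  have ngm: "(\<lambda>s. norm (g s)) \<in> borel_measurable borel" using gm by measurable
  have \<phi>si: "set_integrable lborel {0..t} \<phi>" for t
  proof -
    obtain B where B: "\<And>s. s \<in> {0..t} \<Longrightarrow> norm (g s) \<le> B" using gbd by blast
    show ?thesis
      by (rule si_bdd[OF \<phi>m, where B="B\<^sup>2"]) (use B in \<open>auto simp: \<phi>_def intro!: power_mono\<close>)
  qed
  have ngsi: "set_integrable lborel {0..t} (\<lambda>s. norm (g s))" for t
  proof -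
    obtain B where B: "\<And>s. s \<in> {0..t} \<Longrightarrow> norm (g s) \<le> B" using gbd by blast
    show ?thesis by (rule si_bdd[OF ngm, where B=B]) (use B in auto)
  qed
  have gsi: "set_integrable lborel {0..t} g" for t
  proof -
    obtain B where B: "\<And>s. s \<in> {0..t} \<Longrightarrow> norm (g s) \<le> B" using gbd by blast
    show ?thesis by (rule si_bdd[OF gm, where B=B]) (use B in auto)
  qed
  have Imono: "I t1 \<le> I t2" if "t1 \<le> t2" for t1 t2
    unfolding I_def set_lebesgue_integral_def
  proof (rule integral_mono)
    show "integrable lborel (\<lambda>x. indicator {0..t1} x *\<^sub>R \<phi> x)" using \<phi>si unfolding set_integrable_def by blast
    show "integrable lborel (\<lambda>x. indicator {0..t2} x *\<^sub>R \<phi> x)" using \<phi>si unfolding set_integrable_def by blast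
    show "indicator {0..t1} x *\<^sub>R \<phi> x \<le> indicator {0..t2} x *\<^sub>R \<phi> x" for x
      using that by (auto simp: indicator_def \<phi>_def)
  qed
  have Lt_eq: "Lt t = L0 - I t" if "t \<ge> 0" for t using En[OF that] unfolding I_def \<phi>_def L0_def .
  have I_le: "I t \<le> L0" if "t \<ge> 0" for t using Lt_eq[OF that] Lnn[OF that] by simp
  have Lt_mono: "Lt t2 \<le> Lt t1" if "0 \<le> t1" "t1 \<le> t2" for t1 t2
    using Lt_eq[of t1] Lt_eq[of t2] Imono[of t1 t2] that by simp
  have claim: "\<exists>t\<ge>0. (norm (Th t) + \<bar>\<xi>\<bar>) * norm (g t) \<le> \<epsilon>" if \<epsilon>: "\<epsilon> > 0" for \<epsilon> \<xi>
  proof (rule ccontr)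
    assume "\<not> ?thesis"
    then have big: "\<epsilon> < (norm (Th t) + \<bar>\<xi>\<bar>) * norm (g t)" if "t \<ge> 0" for t using that by force
    define c where "c = (L0 + 1) / 2"
    define A where "A = norm (Th 0) + \<bar>\<xi>\<bar>"
    define D where "D = A + c"
    have A0: "A \<ge> 0" unfolding A_def by simp
    have c0: "c > 0" unfolding c_def using L0 by simp
    have D0: "D > 0" unfolding D_def using A0 c0 by simp
    have growth: "norm (Th t) + \<bar>\<xi>\<bar> \<le> D * sqrt (t + 1)" if t: "t \<ge> 0" for t
    proof -
      define \<sigma> where "\<sigma> = sqrt (t + 1)"
      have \<sigma>1: "\<sigma> \<ge> 1" unfolding \<sigma>_def using t by simp
      have \<sigma>sq: "\<sigma> * \<sigma> = t + 1" unfolding \<sigma>_def using t by simp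
      have one: "(\<integral>s\<in>{0..t}. (1::real) \<partial>lborel) = t"
        using lint_FTC[of t "\<lambda>x. x" "\<lambda>_. 1"] t by (auto intro!: derivative_eq_intros)
      have "norm (Th t) \<le> norm (Th 0) + norm (\<integral>s\<in>{0..t}. g s \<partial>lborel)"
        unfolding flow[OF t] by (rule norm_triangle_ineq4)
      also have "norm (\<integral>s\<in>{0..t}. g s \<partial>lborel) \<le> (\<integral>s\<in>{0..t}. norm (g s) \<partial>lborel)"
        by (rule set_integral_norm_bound[OF gsi])
      also have "\<dots> \<le> (\<integral>s\<in>{0..t}. (\<sigma> / 2) * \<phi> s + (1 / (2 * \<sigma>)) * 1 \<partial>lborel)"
      proof (rule set_integral_mono[OF ngsi])
        show "set_integrable lborel {0..t} (\<lambda>s. \<sigma> / 2 * \<phi> s + 1 / (2 * \<sigma>) * 1)"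
          using \<phi>si[of t] si_bdd[of "\<lambda>_. 1::real" t 1]
          by (intro set_integral_add set_integrable_mult_right) auto
        fix s
        have "0 \<le> (\<sigma> * norm (g s) - 1)\<^sup>2" by simp
        then have "2 * \<sigma> * norm (g s) \<le> \<sigma>\<^sup>2 * \<phi> s + 1"
          unfolding \<phi>_def by (simp add: power2_eq_square algebra_simps)
        then show "norm (g s) \<le> \<sigma> / 2 * \<phi> s + 1 / (2 * \<sigma>) * 1"
          using \<sigma>1 by (simp add: field_simps power2_eq_square)
      qed
      also have "\<dots> = (\<sigma> / 2) * I t + (1 / (2 * \<sigma>)) * t"
        using \<phi>si[of t] si_bdd[of "\<lambda>_. 1::real" t 1] one unfolding I_def
        by (subst set_integral_add) auto
      also have "\<dots> \<le> (\<sigma> / 2) * L0 + \<sigma> / 2"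
      proof -
        have "(\<sigma> / 2) * I t \<le> (\<sigma> / 2) * L0" using I_le[OF t] \<sigma>1 by (intro mult_left_mono) auto
        moreover have "(1 / (2 * \<sigma>)) * t \<le> \<sigma> / 2"
          using \<sigma>1 \<sigma>sq by (simp add: field_simps)
        ultimately show ?thesis by linarith
      qed
      finally have "norm (Th t) \<le> norm (Th 0) + c * \<sigma>" unfolding c_def by (simp add: field_simps)
      then have "norm (Th t) + \<bar>\<xi>\<bar> \<le> A + c * \<sigma>" unfolding A_def by simp
      also have "\<dots> \<le> A * \<sigma> + c * \<sigma>" using A0 \<sigma>1 by (simp add: mult_left_mono[of 1 \<sigma> A, simplified])
      finally show ?thesis unfolding D_def \<sigma>_def by (simp add: algebra_simps)
    qed
    define \<kappa> where "\<kappa> = \<epsilon>\<^sup>2 / D\<^sup>2"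
    have \<kappa>0: "\<kappa> > 0" unfolding \<kappa>_def using \<epsilon> D0 by simp
    have lower: "\<kappa> / (t + 1) \<le> \<phi> t" if t: "t \<ge> 0" for t
    proof -
      have "\<epsilon> < D * sqrt (t + 1) * norm (g t)"
        using big[OF t] growth[OF t] by (smt (verit) mult_right_mono norm_ge_zero)
      then have "\<epsilon>\<^sup>2 \<le> (D * sqrt (t + 1) * norm (g t))\<^sup>2"
        using \<epsilon> by (intro power_mono) auto
      also have "\<dots> = D\<^sup>2 * (t + 1) * \<phi> t" unfolding \<phi>_def using t by (simp add: power_mult_distrib)
      finally have "\<epsilon>\<^sup>2 \<le> D\<^sup>2 * (t + 1) * \<phi> t" .
      have pos: "D\<^sup>2 * (t + 1) > 0" using D0 t by simp
      have "\<kappa> / (t + 1) = \<epsilon>\<^sup>2 / (D\<^sup>2 * (t + 1))" unfolding \<kappa>_def by simp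
      also have "\<dots> \<le> \<phi> t" using pos_divide_le_eq[OF pos] \<open>\<epsilon>\<^sup>2 \<le> D\<^sup>2 * (t + 1) * \<phi> t\<close>
        by (simp add: mult.commute)
      finally show ?thesis .
    qed
    define T where "T = exp ((L0 + 1) / \<kappa>) - 1"
    have T0: "T \<ge> 0" unfolding T_def using L0 \<kappa>0 by simp
    have lnT: "ln (T + 1) = (L0 + 1) / \<kappa>" unfolding T_def by simp
    have "(\<integral>s\<in>{0..T}. \<kappa> / (s + 1) \<partial>lborel) = \<kappa> * ln (T + 1) - \<kappa> * ln (0 + 1)"
    proof (rule lint_FTC[OF T0])
      show "((\<lambda>s. \<kappa> * ln (s + 1)) has_real_derivative \<kappa> / (x + 1)) (at x)" if "0 \<le> x" for x
        using that by (auto intro!: derivative_eq_intros simp: field_simps)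
      show "continuous_on {0..T} (\<lambda>s. \<kappa> / (s + 1))"
        by (intro continuous_intros) auto
    qed
    then have "(\<integral>s\<in>{0..T}. \<kappa> / (s + 1) \<partial>lborel) = L0 + 1" using lnT \<kappa>0 by simp
    moreover have "(\<integral>s\<in>{0..T}. \<kappa> / (s + 1) \<partial>lborel) \<le> I T"
      unfolding I_def
    proof (rule set_integral_mono[OF _ \<phi>si])
      show "set_integrable lborel {0..T} (\<lambda>s. \<kappa> / (s + 1))"
        by (rule si_bdd[where B=\<kappa>]) (use \<kappa>0 in \<open>auto simp: field_simps\<close>)
      show "\<kappa> / (s + 1) \<le> \<phi> s" if "s \<in> {0..T}" for s using lower that by auto
    qed
    ultimately show False using I_le[OF T0] by simp
  qed
  have bound: "Limsup at_top (\<lambda>t. ereal (Lt t)) \<le> ereal (q \<xi> + e)" if e: "e > 0" for \<xi> e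
  proof -
    obtain t0 where t0: "t0 \<ge> 0" "(norm (Th t0) + \<bar>\<xi>\<bar>) * norm (g t0) \<le> e" using claim[OF e] by blast
    have "eventually (\<lambda>t. ereal (Lt t) \<le> ereal (q \<xi> + e)) at_top"
      unfolding eventually_at_top_linorder
    proof (intro exI[of _ t0] allI impI)
      fix t assume "t \<ge> t0"
      then have "Lt t \<le> Lt t0" using Lt_mono t0 by blast
      also have "\<dots> \<le> q \<xi> + e" using key[OF t0(1), of \<xi>] t0(2) by simp
      finally show "ereal (Lt t) \<le> ereal (q \<xi> + e)" by simp
    qed
    then show ?thesis by (rule Limsup_bounded)
  qed
  have bdd: "bdd_below (range q)" using qnn by (intro bdd_belowI2[where m=0]) auto
  show ?thesis
  proof (rule ereal_le_epsilon2)
    fix e :: real assume e: "e > 0"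
    have "(INF \<xi>. q \<xi>) < (INF \<xi>. q \<xi>) + e / 2" using e by simp
    then obtain \<xi> where \<xi>: "q \<xi> < (INF \<xi>. q \<xi>) + e / 2" using cINF_less_iff[OF _ bdd] by blast
    have "Limsup at_top (\<lambda>t. ereal (Lt t)) \<le> ereal (q \<xi> + e / 2)" using bound e by simp
    also have "\<dots> \<le> ereal (INF \<xi>. q \<xi>) + ereal e" using \<xi> by simp
    finally show "Limsup at_top (\<lambda>t. ereal (Lt t)) \<le> ereal (INF \<xi>. q \<xi>) + ereal e" .
  qed
qed

theorem corollary4p2:
  fixes a b :: real
    and f :: "real^'d::finite \<Rightarrow> real"
    and R :: "nat \<Rightarrow> real \<Rightarrow> real"
    and \<mu> :: "(real^'d) measure"
    and G :: "('d,'h::finite) param \<Rightarrow> ('d,'h) param"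
    and \<Theta> :: "real \<Rightarrow> ('d,'h) param"
  assumes ab: "a < b"
    and f_cont: "continuous_on (cube a b) f"
    and R_diff: "\<forall>r\<ge>1. \<forall>x. R r differentiable (at x)"
    and R_C1: "\<forall>r\<ge>1. continuous_on UNIV (deriv (R r))"
    and R_lim: "\<forall>x. (\<lambda>r. \<bar>R r x - relu x\<bar> + \<bar>deriv (R r) x - indicator {0<..} x\<bar>) \<longlonglongrightarrow> 0"
    and R_bd: "\<forall>x. \<exists>C. \<forall>r\<ge>1. \<forall>y\<in>{-\<bar>x\<bar>..\<bar>x\<bar>}. \<bar>deriv (R r) y\<bar> \<le> C"
    and mu_sets: "sets \<mu> = sets (restrict_space borel (cube a b))"
    and mu_fin: "finite_measure \<mu>"
    and G_lim: "\<forall>\<theta> l. (\<lambda>r. grad (risk \<mu> f (R r)) \<theta>) \<longlonglongrightarrow> l \<longrightarrow> G \<theta> = l"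
    and G_meas: "G \<in> borel_measurable borel"
    and G_locbd: "\<forall>K. compact K \<longrightarrow> bounded (G ` K)"
    and Theta_cont: "continuous_on {0..} \<Theta>"
    and Theta_flow: "\<forall>t\<ge>0. \<Theta> t = \<Theta> 0 - (\<integral>s\<in>{0..t}. G (\<Theta> s) \<partial>lborel)"
  shows "Limsup at_top (\<lambda>t. ereal (risk \<mu> f relu (\<Theta> t)))
           \<le> ereal (INF \<xi>. (\<integral>x. (f x - \<xi>)\<^sup>2 \<partial>\<mu>))"
proof -
  interpret netsetting a b f R \<mu>
    by (intro netsetting.intro ab f_cont R_diff R_C1 R_lim R_bd mu_sets mu_fin)
  interpret fm: finite_measure \<mu> by (rule mu_fin)
  define Gx where "Gx \<theta> = (\<integral>y. gi f relu (indicator {0<..}) \<theta> y \<partial>\<mu>)" for \<theta> :: "('d,'h) param"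
  define Dr where "Dr r \<theta> = (\<integral>y. gi f (R r) (deriv (R r)) \<theta> y \<partial>\<mu>)" for r and \<theta> :: "('d,'h) param"
  have G_eq: "G \<theta> = Gx \<theta>" for \<theta>
  proof -
    have "(\<lambda>r. grad (risk \<mu> f (R r)) \<theta>) \<longlonglongrightarrow> Gx \<theta>"
    proof (rule LIMSEQ_imp_Suc)
      have "(\<lambda>r. grad (risk \<mu> f (R (Suc r))) \<theta>) = (\<lambda>r. Dr (Suc r) \<theta>)"
      proof
        fix r
        show "grad (risk \<mu> f (R (Suc r))) \<theta> = Dr (Suc r) \<theta>"
          unfolding Dr_def by (rule grad_eqI[OF risk_deriv(1)]) simp
      qed
      then show "(\<lambda>r. grad (risk \<mu> f (R (Suc r))) \<theta>) \<longlonglongrightarrow> Gx \<theta>"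
        using LIMSEQ_Suc[OF limits(3)[of \<theta>]] by (simp add: Gx_def Dr_def)
    qed
    then show ?thesis using G_lim by blast
  qed
  have Dr_cont: "isCont (Dr r) \<theta>" if "r \<ge> 1" for r \<theta>
    unfolding Dr_def using risk_deriv(2)[OF that] by blast
  have Dr_der: "(risk \<mu> f (R r) has_derivative (\<lambda>h. Dr r \<theta> \<bullet> h)) (at \<theta>)" if "r \<ge> 1" for r \<theta>
    unfolding Dr_def using risk_deriv(1)[OF that] by blast
  have Dr_lim: "(\<lambda>r. Dr r \<theta>) \<longlonglongrightarrow> G \<theta>" for \<theta>
    unfolding G_eq Dr_def Gx_def by (rule limits(3))
  define Th where "Th s = \<Theta> (max 0 s)" for s
  have Th_eq: "Th t = \<Theta> t" if "t \<ge> 0" for t using that by (simp add: Th_def)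
  have Thc: "continuous_on UNIV Th"
    unfolding Th_def by (rule continuous_on_compose2[OF Theta_cont]) (auto intro!: continuous_intros)
  have Thm: "Th \<in> borel_measurable borel" by (rule borel_measurable_continuous_onI[OF Thc])
  define g where "g s = G (Th s)" for s
  have gm: "g \<in> borel_measurable borel" unfolding g_def by (rule measurable_compose[OF Thm G_meas])
  have cpt: "compact (Th ` {0..T})" for T
    by (intro compact_continuous_image continuous_on_subset[OF Thc]) auto
  have gbd: "\<exists>B. \<forall>s\<in>{0..T}. norm (g s) \<le> B" for T
  proof -
    have "bounded (G ` (Th ` {0..T}))" using G_locbd cpt by blast
    then show ?thesis unfolding g_def bounded_iff by auto
  qed
  have gsi: "set_integrable lborel {0..t} g" for t
    using gbd[of t] gm si_bdd by blast
  have gint: "g integrable_on {0..t}" for t by (rule set_borel_integral_eq_integral(1)[OF gsi])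
  have flow: "Th t = Th 0 - integral {0..t} g" if t: "t \<ge> 0" for t
  proof -
    have e1: "\<Theta> t = \<Theta> 0 - (\<integral>s\<in>{0..t}. G (\<Theta> s) \<partial>lborel)" using Theta_flow t by blast
    have e2: "(\<integral>s\<in>{0..t}. G (\<Theta> s) \<partial>lborel) = (\<integral>s\<in>{0..t}. g s \<partial>lborel)"
      by (rule set_lebesgue_integral_cong) (auto simp: g_def Th_eq)
    have e3: "(\<integral>s\<in>{0..t}. g s \<partial>lborel) = integral {0..t} g"
      by (rule set_borel_integral_eq_integral(2)[OF gsi])
    have "Th t = \<Theta> t" by (rule Th_eq[OF t])
    also have "\<dots> = \<Theta> 0 - integral {0..t} g" unfolding e1 e2 e3 ..
    also have "\<Theta> 0 = Th 0" by (simp add: Th_def)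
    finally show ?thesis .
  qed
  have Dbd: "\<exists>B. \<forall>s\<in>{0..T}. \<forall>r\<ge>1. norm (Dr r (Th s)) \<le> B" for T
  proof -
    obtain \<rho> where \<rho>: "\<And>x. x \<in> Th ` {0..T} \<Longrightarrow> norm x \<le> \<rho>"
      using compact_imp_bounded[OF cpt[of T]] unfolding bounded_iff by blast
    obtain B where B: "\<And>\<theta> y r. norm \<theta> \<le> \<rho> \<Longrightarrow> y \<in> cube a b \<Longrightarrow> r \<ge> 1 \<Longrightarrow> norm (gi f (R r) (deriv (R r)) (\<theta>::('d,'h) param) y) \<le> B"
      using uniform_bounds[of \<rho>] by blast
    show ?thesis
    proof (intro exI[of _ "measure \<mu> (space \<mu>) * B"] ballI allI impI)
      fix s r assume s: "s \<in> {0..T}" and r: "(1::nat) \<le> r"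
      have int: "integrable \<mu> (gi f (R r) (deriv (R r)) (Th s))"
        by (rule int_cont[OF cont_slice[OF gi_cont_joint(1)[OF R_cont[OF r] R_C1[rule_format, OF r]]]])
      have thr: "norm (Th s) \<le> \<rho>" using s by (intro \<rho>) auto
      have pb: "norm (gi f (R r) (deriv (R r)) (Th s) y) \<le> B" if "y \<in> space \<mu>" for y
        using B[OF thr _ r] that by (simp add: space_mu)
      have "norm (Dr r (Th s)) \<le> (\<integral>y. B \<partial>\<mu>)"
        unfolding Dr_def by (rule my_norm_bound[OF int fm.integrable_const pb])
      then show "norm (Dr r (Th s)) \<le> measure \<mu> (space \<mu>) * B" by simp
    qed
  qed
  have hm: "(\<lambda>s. Dr r (Th s) \<bullet> g s) \<in> borel_measurable borel" if "r \<ge> 1" for r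
  proof -
    have "continuous_on UNIV (\<lambda>s. Dr r (Th s))"
      by (rule continuous_on_compose2[OF continuous_at_imp_continuous_on[of UNIV "Dr r"] Thc])
        (use Dr_cont[OF that] in auto)
    then have "(\<lambda>s. Dr r (Th s)) \<in> borel_measurable borel" by (rule borel_measurable_continuous_onI)
    then show ?thesis using gm by (rule borel_measurable_inner)
  qed
  have hsi: "set_integrable lborel {0..t} (\<lambda>s. Dr r (Th s) \<bullet> g s)" if "r \<ge> 1" for r t
  proof -
    obtain B1 where B0: "\<forall>s\<in>{0..t}. \<forall>r\<ge>1. norm (Dr r (Th s)) \<le> B1" using Dbd[of t] by blast
    have B1: "\<And>s. s \<in> {0..t} \<Longrightarrow> norm (Dr r (Th s)) \<le> B1" using B0 that by blast
    obtain B2 where B2: "\<And>s. s \<in> {0..t} \<Longrightarrow> norm (g s) \<le> B2" using gbd[of t] by blast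
    show ?thesis
    proof (rule si_bdd[OF hm[OF that], where B="B1 * B2"])
      fix s assume s: "s \<in> {0..t}"
      have "norm (Dr r (Th s) \<bullet> g s) \<le> norm (Dr r (Th s)) * norm (g s)"
        by (simp add: Cauchy_Schwarz_ineq2)
      also have "\<dots> \<le> B1 * B2" using B1[OF s] B2[OF s] by (meson mult_mono norm_ge_zero order_trans)
      finally show "norm (Dr r (Th s) \<bullet> g s) \<le> B1 * B2" .
    qed
  qed
  have En_r: "risk \<mu> f (R r) (Th t) = risk \<mu> f (R r) (Th 0) - (\<integral>s\<in>{0..t}. Dr r (Th s) \<bullet> g s \<partial>lborel)"
    if r: "r \<ge> 1" and t: "t \<ge> 0" for r t
  proof -
    have "risk \<mu> f (R r) (Th t) = risk \<mu> f (R r) (Th 0) - integral {0..t} (\<lambda>s. Dr r (Th s) \<bullet> g s)"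
      by (rule chain_flow[OF Dr_der[OF r] Dr_cont[OF r] Thc gint gbd flow
            set_borel_integral_eq_integral(1)[OF hsi[OF r]] t])
    then show ?thesis using set_borel_integral_eq_integral(2)[OF hsi[OF r]] by simp
  qed
  have gsi': "set_integrable lborel {0..t} (\<lambda>s. (norm (g s))\<^sup>2)" for t
  proof -
    obtain B where B: "\<And>s. s \<in> {0..t} \<Longrightarrow> norm (g s) \<le> B" using gbd by blast
    have "(\<lambda>s. (norm (g s))\<^sup>2) \<in> borel_measurable borel" using gm by measurable
    then show ?thesis
      by (rule si_bdd[where B="B\<^sup>2"]) (use B in \<open>auto intro!: power_mono\<close>)
  qed
  have En: "risk \<mu> f relu (Th t) = risk \<mu> f relu (Th 0) - (\<integral>s\<in>{0..t}. (norm (g s))\<^sup>2 \<partial>lborel)"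
    if t: "t \<ge> 0" for t
  proof -
    obtain B1 where B0: "\<forall>s\<in>{0..t}. \<forall>r\<ge>1. norm (Dr r (Th s)) \<le> B1" using Dbd[of t] by blast
    obtain B2 where B2: "\<And>s. s \<in> {0..t} \<Longrightarrow> norm (g s) \<le> B2" using gbd[of t] by blast
    have DCT: "(\<lambda>r. \<integral>s\<in>{0..t}. Dr (Suc r) (Th s) \<bullet> g s \<partial>lborel) \<longlonglongrightarrow> (\<integral>s\<in>{0..t}. (norm (g s))\<^sup>2 \<partial>lborel)"
      unfolding set_lebesgue_integral_def
    proof (rule integral_dominated_convergence[where w="\<lambda>s. indicator {0..t} s * (B1 * B2)"])
      show "(\<lambda>s. indicator {0..t} s *\<^sub>R (norm (g s))\<^sup>2) \<in> borel_measurable lborel"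
        using gsi'[of t] unfolding set_integrable_def by (rule borel_measurable_integrable)
      show "(\<lambda>s. indicator {0..t} s *\<^sub>R (Dr (Suc r) (Th s) \<bullet> g s)) \<in> borel_measurable lborel" for r
        using hsi[of "Suc r" t] unfolding set_integrable_def by (auto intro: borel_measurable_integrable)
      show "integrable lborel (\<lambda>s. indicator {0..t} s * (B1 * B2))"
        using si_bdd[of "\<lambda>_. B1 * B2" t "\<bar>B1 * B2\<bar>"] unfolding set_integrable_def by simp
      show "AE s in lborel. (\<lambda>r. indicator {0..t} s *\<^sub>R (Dr (Suc r) (Th s) \<bullet> g s)) \<longlonglongrightarrow> indicator {0..t} s *\<^sub>R (norm (g s))\<^sup>2"
      proof (intro AE_I2)
        fix s
        have "(\<lambda>r. Dr (Suc r) (Th s) \<bullet> g s) \<longlonglongrightarrow> G (Th s) \<bullet> g s"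
          by (intro tendsto_intros LIMSEQ_Suc[OF Dr_lim])
        then show "(\<lambda>r. indicator {0..t} s *\<^sub>R (Dr (Suc r) (Th s) \<bullet> g s)) \<longlonglongrightarrow> indicator {0..t} s *\<^sub>R (norm (g s))\<^sup>2"
          by (intro tendsto_intros) (simp add: g_def power2_norm_eq_inner)
      qed
      show "AE s in lborel. norm (indicator {0..t} s *\<^sub>R (Dr (Suc r) (Th s) \<bullet> g s)) \<le> indicator {0..t} s * (B1 * B2)" for r
      proof (intro AE_I2)
        fix s
        show "norm (indicator {0..t} s *\<^sub>R (Dr (Suc r) (Th s) \<bullet> g s)) \<le> indicator {0..t} s * (B1 * B2)"
        proof (cases "s \<in> {0..t}")
          case True
          have "Suc r \<ge> 1" by simp
          then have n1: "norm (Dr (Suc r) (Th s)) \<le> B1" using B0 True by blast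
          have "\<bar>Dr (Suc r) (Th s) \<bullet> g s\<bar> \<le> norm (Dr (Suc r) (Th s)) * norm (g s)" by (rule Cauchy_Schwarz_ineq2)
          also have "\<dots> \<le> B1 * B2" using n1 B2[OF True] by (meson mult_mono norm_ge_zero order_trans)
          finally show ?thesis using True by simp
        qed simp
      qed
    qed
    have l1: "(\<lambda>r. risk \<mu> f (R (Suc r)) (Th t)) \<longlonglongrightarrow> risk \<mu> f relu (Th t)"
      by (rule LIMSEQ_Suc[OF limits(4)])
    have l2: "(\<lambda>r. risk \<mu> f (R (Suc r)) (Th 0) - (\<integral>s\<in>{0..t}. Dr (Suc r) (Th s) \<bullet> g s \<partial>lborel))
        \<longlonglongrightarrow> risk \<mu> f relu (Th 0) - (\<integral>s\<in>{0..t}. (norm (g s))\<^sup>2 \<partial>lborel)"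
      by (rule tendsto_diff[OF LIMSEQ_Suc[OF limits(4)] DCT])
    have "(\<lambda>r. risk \<mu> f (R (Suc r)) (Th t)) = (\<lambda>r. risk \<mu> f (R (Suc r)) (Th 0) - (\<integral>s\<in>{0..t}. Dr (Suc r) (Th s) \<bullet> g s \<partial>lborel))"
    proof
      fix r show "risk \<mu> f (R (Suc r)) (Th t) = risk \<mu> f (R (Suc r)) (Th 0) - (\<integral>s\<in>{0..t}. Dr (Suc r) (Th s) \<bullet> g s \<partial>lborel)"
        by (rule En_r[OF _ t]) simp
    qed
    with l1 have "(\<lambda>r. risk \<mu> f (R (Suc r)) (Th 0) - (\<integral>s\<in>{0..t}. Dr (Suc r) (Th s) \<bullet> g s \<partial>lborel)) \<longlonglongrightarrow> risk \<mu> f relu (Th t)"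
      by simp
    from LIMSEQ_unique[OF this l2] show ?thesis .
  qed
  have flowL: "Th t = Th 0 - (\<integral>s\<in>{0..t}. g s \<partial>lborel)" if "t \<ge> 0" for t
    using flow[OF that] set_borel_integral_eq_integral(2)[OF gsi] by simp
  have Lnn: "risk \<mu> f relu \<theta> \<ge> 0" for \<theta> :: "('d,'h) param"
    unfolding risk_def by (rule integral_nonneg_AE) auto
  have qnn: "(\<integral>x. (f x - \<xi>)\<^sup>2 \<partial>\<mu>) \<ge> 0" for \<xi>
    by (rule integral_nonneg_AE) auto
  have key: "risk \<mu> f relu (Th t) \<le> (\<integral>x. (f x - \<xi>)\<^sup>2 \<partial>\<mu>) + (norm (Th t) + \<bar>\<xi>\<bar>) * norm (g t)" for t \<xi>
    using key_ineq[of "Th t" \<xi>] unfolding g_def G_eq Gx_def .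
  have main: "Limsup at_top (\<lambda>t. ereal (risk \<mu> f relu (Th t))) \<le> ereal (INF \<xi>. (\<integral>x. (f x - \<xi>)\<^sup>2 \<partial>\<mu>))"
    by (rule final_arg[OF gm gbd flowL En Lnn key qnn])
  have "Limsup at_top (\<lambda>t. ereal (risk \<mu> f relu (\<Theta> t))) = Limsup at_top (\<lambda>t. ereal (risk \<mu> f relu (Th t)))"
    by (rule Limsup_eq) (use eventually_ge_at_top[of "0::real"] in \<open>eventually_elim, simp add: Th_eq\<close>)
  with main show ?thesis by simp
qed

end
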